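(* (PVH Criterion.) If $\pi^{Syz}_p$ is surjective for all $p\ge 2$, then $K$ is quadratic, i.e. the natural surjection $A^m\to I_K^m/I_K^{m+1}$ is an isomorphism for all $m$. If moreover $X$ is finite and $A$ is Koszul, then it suffices that $\pi^{Syz}_p$ be surjective for $p=2$ and $p=3$.
   Context: Let $K$ be an augmented unital $\mathbb{Q}$-algebra generated by a set $X$, $F$ the free unital $\mathbb{Q}$-algebra on $X$, and $I_F\subseteq F$, $I_K\subseteq K$ the kernels of the algebra maps sending each $x\in X$ to $1$. Let $\tilde X=\mathbb{Q}\{x-1:x\in X\}$, so $F=T\tilde X=\bigoplus_p\tilde X^p$ and $I_F^p=\bigoplus_{q\ge p}\tilde X^q$. Let $M\subseteq I_F$ be a two-sided ideal with $K=F/M$. $K$ and $F$ are replaced by their completions with respect to powers of their augmentation ideals, and $M\subseteq I_F^2$ is assumed. Let $\{y_q:q\in Q\}\subseteq I_F^2$ generate $M$ as a two-sided ideal, $Y_F=\{Y_q\}$ symbols in bijection with them, $R$ the free two-sided $F$-module on $Y_F$, and $\partial_K:R\to F$ the bimodule map $Y_q\mapsto y_q$. Grade $R$ by $R_p=\sum_{q=0}^{p-2}\tilde X^q\cdot\mathbb{Q}Y_F\cdot\tilde X^{p-q-2}$ and set $R_{\ge p}=\bigoplus_{q\ge p}R_q$. Let $\pi^0_p:I_F^p\to\tilde X^p$, $\pi^1_p:R_{\ge p}\to R_p$ be the degree-$p$ projections, $\partial_A=\pi^0_p\circ\partial_K:R_p\to\tilde X^p$, and $A=\bigoplus_p\tilde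 X^p/\bigoplus_p\partial_A(R_p)$ with graded pieces $A^p$ (this is the quadratic approximation of $\operatorname{gr}K=\bigoplus_m I_K^m/I_K^{m+1}$, and there is a natural surjection $A^m\to I_K^m/I_K^{m+1}$ induced by $\tilde X^m\cong I_F^m/I_F^{m+1}\to I_K^m/I_K^{m+1}$). $\pi^{Syz}_p:\ker(\partial_K|_{R_{\ge p}})\to\ker(\partial_A|_{R_p})$ is the map induced by $\pi^1_p$. $K$ is called quadratic if $A^m\to I_K^m/I_K^{m+1}$ is an isomorphism for all $m$. *)

theory Defs
  imports Complex_Main
begin

text \<open>
The generating set X is the type 'x (all of it).  Writing t_x = x - 1,
the completed free algebra F (completion w.r.t. powers of I_F) is the space of
formal series  sum_w f(w) t_w  over words w in 'x list, with only finitely many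
nonzero coefficients in each length (= each homogeneous degree).  Generators y_q of M
are indexed by a type 'q.  The completed free bimodule R on the symbols Y_q has the
basis  t_u Y_q t_v  (triples (u,q,v)) of degree |u|+|v|+2.
\<close>

type_synonym 'x ser = "'x list \<Rightarrow> rat"
type_synonym ('x,'q) rser = "'x list \<times> 'q \<times> 'x list \<Rightarrow> rat"

definition Fhat :: "'x ser set" where
  "Fhat = {f. \<forall>n. finite {w. length w = n \<and> f w \<noteq> 0}}"

definition fzero :: "'x ser" where "fzero = (\<lambda>_. 0)"
definition fadd :: "'x ser \<Rightarrow> 'x ser \<Rightarrow> 'x ser" where "fadd f g = (\<lambda>w. f w + g w)"
definition fsub :: "'x ser \<Rightarrow> 'x ser \<Rightarrow> 'x ser" where "fsub f g = (\<lambda>w. f w - g w)"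

definition fmul :: "'x ser \<Rightarrow> 'x ser \<Rightarrow> 'x ser" where
  "fmul f g = (\<lambda>w. \<Sum>i\<le>length w. f (take i w) * g (drop i w))"

definition setplus :: "'x ser set \<Rightarrow> 'x ser set \<Rightarrow> 'x ser set" where
  "setplus S T = {fadd s t |s t. s \<in> S \<and> t \<in> T}"

definition IF :: "nat \<Rightarrow> 'x ser set" where
  "IF p = {f \<in> Fhat. \<forall>w. length w < p \<longrightarrow> f w = 0}"

definition Xt :: "nat \<Rightarrow> 'x ser set" where
  "Xt p = {f \<in> Fhat. \<forall>w. length w \<noteq> p \<longrightarrow> f w = 0}"

definition pi0 :: "nat \<Rightarrow> 'x ser \<Rightarrow> 'x ser" where
  "pi0 p f = (\<lambda>w. if length w = p then f w else 0)"

definition rdeg :: "'x list \<times> 'q \<times> 'x list \<Rightarrow> nat" where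
  "rdeg b = length (fst b) + length (snd (snd b)) + 2"

definition Rhat :: "('x,'q) rser set" where
  "Rhat = {r. \<forall>n. finite {b. rdeg b = n \<and> r b \<noteq> 0}}"

definition Rge :: "nat \<Rightarrow> ('x,'q) rser set" where
  "Rge p = {r \<in> Rhat. \<forall>b. rdeg b < p \<longrightarrow> r b = 0}"

definition Rdeg :: "nat \<Rightarrow> ('x,'q) rser set" where
  "Rdeg p = {r \<in> Rhat. \<forall>b. rdeg b \<noteq> p \<longrightarrow> r b = 0}"

definition pi1 :: "nat \<Rightarrow> ('x,'q) rser \<Rightarrow> ('x,'q) rser" where
  "pi1 p r = (\<lambda>b. if rdeg b = p then r b else 0)"

text \<open>partial_K : R \<rightarrow> F, the bimodule map t_u Y_q t_v \<mapsto> t_u y_q t_v.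
  Coefficient at w: sum over decompositions w = u @ m @ v.\<close>
definition dK :: "('q \<Rightarrow> 'x ser) \<Rightarrow> ('x,'q) rser \<Rightarrow> 'x ser" where
  "dK y r = (\<lambda>w. \<Sum>b \<in> {(u,q,v). r (u,q,v) \<noteq> 0 \<and> length u + length v \<le> length w
                     \<and> take (length u) w = u \<and> drop (length w - length v) w = v}.
       r b * y (fst (snd b))
         (drop (length (fst b)) (take (length w - length (snd (snd b))) w)))"

text \<open>M = the (closed) two-sided ideal generated by the y_q = image of partial_K.\<close>
definition Mid :: "('q \<Rightarrow> 'x ser) \<Rightarrow> 'x ser set" where
  "Mid y = dK y ` Rhat"

definition dA :: "('q \<Rightarrow> 'x ser) \<Rightarrow> nat \<Rightarrow> ('x,'q) rser \<Rightarrow> 'x ser" where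
  "dA y p r = pi0 p (dK y r)"

definition JA :: "('q \<Rightarrow> 'x ser) \<Rightarrow> nat \<Rightarrow> 'x ser set" where
  "JA y p = dA y p ` Rdeg p"

definition kerK :: "('q \<Rightarrow> 'x ser) \<Rightarrow> nat \<Rightarrow> ('x,'q) rser set" where
  "kerK y p = {r \<in> Rge p. dK y r = fzero}"

definition kerA :: "('q \<Rightarrow> 'x ser) \<Rightarrow> nat \<Rightarrow> ('x,'q) rser set" where
  "kerA y p = {r \<in> Rdeg p. dA y p r = fzero}"

definition syz_surj :: "('q \<Rightarrow> 'x ser) \<Rightarrow> nat \<Rightarrow> bool" where
  "syz_surj y p = (\<forall>s \<in> kerA y p. \<exists>r \<in> kerK y p. pi1 p r = s)"

text \<open>K = F/M as cosets; I_K^m = image of I_F^m; A^m = X~^m / partial_A(R_m);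
  gr^m K = I_K^m / I_K^{m+1}; the natural map A^m \<rightarrow> gr^m K.\<close>
definition qK :: "('q \<Rightarrow> 'x ser) \<Rightarrow> 'x ser \<Rightarrow> 'x ser set" where
  "qK y f = {g \<in> Fhat. fsub g f \<in> Mid y}"

definition IK :: "('q \<Rightarrow> 'x ser) \<Rightarrow> nat \<Rightarrow> 'x ser set set" where
  "IK y m = qK y ` IF m"

definition Aquot :: "('q \<Rightarrow> 'x ser) \<Rightarrow> nat \<Rightarrow> 'x ser set set" where
  "Aquot y m = (\<lambda>v. {v' \<in> Xt m. fsub v' v \<in> JA y m}) ` Xt m"

definition grclass :: "('q \<Rightarrow> 'x ser) \<Rightarrow> nat \<Rightarrow> 'x ser set \<Rightarrow> 'x ser set set" where
  "grclass y m k = {k' \<in> IK y m. \<exists>g f. k' = qK y g \<and> k = qK y f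
                        \<and> qK y (fsub g f) \<in> IK y (Suc m)}"

definition grK :: "('q \<Rightarrow> 'x ser) \<Rightarrow> nat \<Rightarrow> 'x ser set set set" where
  "grK y m = grclass y m ` IK y m"

definition natmap :: "('q \<Rightarrow> 'x ser) \<Rightarrow> nat \<Rightarrow> 'x ser set \<Rightarrow> 'x ser set set" where
  "natmap y m a = grclass y m (qK y (SOME v. v \<in> a))"

definition quadratic :: "('q \<Rightarrow> 'x ser) \<Rightarrow> bool" where
  "quadratic y = (\<forall>m. bij_betw (natmap y m) (Aquot y m) (grK y m))"

text \<open>Koszulness of A = T(V)/(W), V = X~^1, W = partial_A(R_2) \<subseteq> V\<otimes>V, via acyclicity of
  the Koszul complex  ... \<rightarrow> A \<otimes> W_n \<rightarrow> A \<otimes> W_{n-1} \<rightarrow> ... \<rightarrow> A \<rightarrow> Q \<rightarrow> 0,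
  W_n = \<Inter>_{i+j+2=n} V^i W V^j (W_0 = Q, W_1 = V), differential a\<otimes>v_1..v_n \<mapsto> a v_1 \<otimes> v_2..v_n.
  In internal degree m, A^{m-n}\<otimes>W_n = (V^{m-n}\<otimes>W_n)/(J_{m-n}\<otimes>W_n) \<subseteq> quotient of V^{\<otimes>m},
  and the differential is induced by the identity of V^{\<otimes>m}.\<close>
definition lspan :: "'x ser set \<Rightarrow> 'x ser set" where
  "lspan S = {f. \<exists>n (c::nat \<Rightarrow> rat) s. (\<forall>i<n. s i \<in> S) \<and> f = (\<lambda>w. \<Sum>i<n. c i * s i w)}"

definition tens :: "'x ser set \<Rightarrow> 'x ser set \<Rightarrow> 'x ser set" where
  "tens S T = lspan {fmul s t |s t. s \<in> S \<and> t \<in> T}"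

definition Wn :: "('q \<Rightarrow> 'x ser) \<Rightarrow> nat \<Rightarrow> 'x ser set" where
  "Wn y n = (if n = 0 then Xt 0 else if n = 1 then Xt 1
             else (\<Inter>i\<in>{..n-2}. tens (tens (Xt i) (JA y 2)) (Xt (n - 2 - i))))"

definition kzC :: "('q \<Rightarrow> 'x ser) \<Rightarrow> nat \<Rightarrow> nat \<Rightarrow> 'x ser set" where
  "kzC y m n = (if n \<le> m then tens (Xt (m - n)) (Wn y n) else {fzero})"

definition kzRel :: "('q \<Rightarrow> 'x ser) \<Rightarrow> nat \<Rightarrow> nat \<Rightarrow> 'x ser set" where
  "kzRel y m n = (if n \<le> m then tens (JA y (m - n)) (Wn y n) else {fzero})"

definition koszul :: "('q \<Rightarrow> 'x ser) \<Rightarrow> bool" where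
  "koszul y = (\<forall>m\<ge>1. \<forall>n\<le>m.
      (if n = 0 then kzC y m 0 else kzC y m n \<inter> kzRel y m (n - 1))
        \<subseteq> setplus (kzC y m (Suc n)) (kzRel y m n))"

end

theory Submission
  imports Defs "HOL-Library.Function_Algebras" begin

lemma sum_fun_apply: "(sum F A) x = (\<Sum>a\<in>A. F a x)"
  by (induction A rule: infinite_finite_induct) auto

lemma sum_Sigma_fs: "finite A \<Longrightarrow> (\<And>x. x\<in>A \<Longrightarrow> finite (B x)) \<Longrightarrow> (\<Sum>x\<in>A. \<Sum>y\<in>B x. g x y) = (\<Sum>p\<in>Sigma A B. g (fst p) (snd p))"
  by (simp add: sum.Sigma split_def)

definition S2 :: "'a list \<Rightarrow> ('a list \<times> 'a list) set" where
  "S2 w = {(a,b). a @ b = w}"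
definition S3 :: "'a list \<Rightarrow> ('a list \<times> 'a list \<times> 'a list) set" where
  "S3 w = {(a,b,c). a @ b @ c = w}"
definition S4 :: "'a list \<Rightarrow> ('a list \<times> 'a list \<times> 'a list \<times> 'a list) set" where
  "S4 w = {(a,b,c,d). a @ b @ c @ d = w}"

lemma S2_eq: "S2 w = (\<lambda>i. (take i w, drop i w)) ` {..length w}"
  unfolding S2_def
proof (safe)
  fix a b assume "w = a @ b" then show "(a, b) \<in> (\<lambda>i. (take i (a@b), drop i (a@b))) ` {..length (a@b)}"
    by (intro image_eqI[where x="length a"]) auto
qed auto

lemma finite_S2[simp]: "finite (S2 w)" by (simp add: S2_eq)

lemma S3_eq: "S3 w = (\<lambda>((a,x),(b,c)). (a,b,c)) ` Sigma (S2 w) (\<lambda>(a,x). S2 x)"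
  unfolding S3_def S2_def by (force simp: image_iff)

lemma finite_S3[simp]: "finite (S3 w)"
  unfolding S3_eq by (rule finite_imageI, rule finite_SigmaI) auto

lemma S4_eq: "S4 w = (\<lambda>((a,x),(b,c,d)). (a,b,c,d)) ` Sigma (S2 w) (\<lambda>(a,x). S3 x)"
  unfolding S4_def S3_def S2_def by (force simp: image_iff)

lemma finite_S4[simp]: "finite (S4 w)"
  unfolding S4_eq by (rule finite_imageI, rule finite_SigmaI) auto

lemma sum_S2_S2_right: "(\<Sum>(a,x)\<in>S2 w. \<Sum>(b,c)\<in>S2 x. F a b c) = (\<Sum>(a,b,c)\<in>S3 w. F a b c)"
proof -
  have "(\<Sum>(a,x)\<in>S2 w. \<Sum>(b,c)\<in>S2 x. F a b c) = (\<Sum>((a,x),(b,c))\<in>Sigma (S2 w) (\<lambda>(a,x). S2 x). F a b c)"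
    unfolding split_def by (rule sum_Sigma_fs) auto
  also have "\<dots> = (\<Sum>(a,b,c)\<in>S3 w. F a b c)"
    by (rule sum.reindex_bij_witness[where i="\<lambda>(a,b,c). ((a,b@c),(b,c))" and j="\<lambda>((a,x),(b,c)). (a,b,c)"])
       (auto simp: S2_def S3_def)
  finally show ?thesis .
qed

lemma sum_S2_S2_left: "(\<Sum>(x,c)\<in>S2 w. \<Sum>(a,b)\<in>S2 x. F a b c) = (\<Sum>(a,b,c)\<in>S3 w. F a b c)"
proof -
  have "(\<Sum>(x,c)\<in>S2 w. \<Sum>(a,b)\<in>S2 x. F a b c) = (\<Sum>((x,c),(a,b))\<in>Sigma (S2 w) (\<lambda>(x,c). S2 x). F a b c)"
    unfolding split_def by (rule sum_Sigma_fs) auto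
  also have "\<dots> = (\<Sum>(a,b,c)\<in>S3 w. F a b c)"
    by (rule sum.reindex_bij_witness[where i="\<lambda>(a,b,c). ((a@b,c),(a,b))" and j="\<lambda>((x,c),(a,b)). (a,b,c)"])
       (auto simp: S2_def S3_def)
  finally show ?thesis .
qed

lemma sum_S2_S3_right: "(\<Sum>(a,x)\<in>S2 w. \<Sum>(b,c,d)\<in>S3 x. F a b c d) = (\<Sum>(a,b,c,d)\<in>S4 w. F a b c d)"
proof -
  have "(\<Sum>(a,x)\<in>S2 w. \<Sum>(b,c,d)\<in>S3 x. F a b c d) = (\<Sum>((a,x),(b,c,d))\<in>Sigma (S2 w) (\<lambda>(a,x). S3 x). F a b c d)"
    unfolding split_def by (rule sum_Sigma_fs) auto
  also have "\<dots> = (\<Sum>(a,b,c,d)\<in>S4 w. F a b c d)"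
    by (rule sum.reindex_bij_witness[where i="\<lambda>(a,b,c,d). ((a,b@c@d),(b,c,d))" and j="\<lambda>((a,x),(b,c,d)). (a,b,c,d)"])
       (auto simp: S3_def S2_def S4_def)
  finally show ?thesis .
qed

lemma sum_S2_S3_left: "(\<Sum>(x,d)\<in>S2 w. \<Sum>(a,b,c)\<in>S3 x. F a b c d) = (\<Sum>(a,b,c,d)\<in>S4 w. F a b c d)"
proof -
  have "(\<Sum>(x,d)\<in>S2 w. \<Sum>(a,b,c)\<in>S3 x. F a b c d) = (\<Sum>((x,d),(a,b,c))\<in>Sigma (S2 w) (\<lambda>(x,d). S3 x). F a b c d)"
    unfolding split_def by (rule sum_Sigma_fs) auto
  also have "\<dots> = (\<Sum>(a,b,c,d)\<in>S4 w. F a b c d)"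
    by (rule sum.reindex_bij_witness[where i="\<lambda>(a,b,c,d). ((a@b@c,d),(a,b,c))" and j="\<lambda>((x,d),(a,b,c)). (a,b,c,d)"])
       (auto simp: S3_def S2_def S4_def)
  finally show ?thesis .
qed

lemma sum_S3_S2_first: "(\<Sum>(x,c,d)\<in>S3 w. \<Sum>(a,b)\<in>S2 x. F a b c d) = (\<Sum>(a,b,c,d)\<in>S4 w. F a b c d)"
proof -
  have "(\<Sum>(x,c,d)\<in>S3 w. \<Sum>(a,b)\<in>S2 x. F a b c d) = (\<Sum>((x,c,d),(a,b))\<in>Sigma (S3 w) (\<lambda>(x,c,d). S2 x). F a b c d)"
    unfolding split_def by (rule sum_Sigma_fs) auto
  also have "\<dots> = (\<Sum>(a,b,c,d)\<in>S4 w. F a b c d)"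
    by (rule sum.reindex_bij_witness[where i="\<lambda>(a,b,c,d). ((a@b,c,d),(a,b))" and j="\<lambda>((x,c,d),(a,b)). (a,b,c,d)"])
       (auto simp: S3_def S2_def S4_def)
  finally show ?thesis .
qed

lemma sum_S3_S2_last: "(\<Sum>(a,b,x)\<in>S3 w. \<Sum>(c,d)\<in>S2 x. F a b c d) = (\<Sum>(a,b,c,d)\<in>S4 w. F a b c d)"
proof -
  have "(\<Sum>(a,b,x)\<in>S3 w. \<Sum>(c,d)\<in>S2 x. F a b c d) = (\<Sum>((a,b,x),(c,d))\<in>Sigma (S3 w) (\<lambda>(a,b,x). S2 x). F a b c d)"
    unfolding split_def by (rule sum_Sigma_fs) auto
  also have "\<dots> = (\<Sum>(a,b,c,d)\<in>S4 w. F a b c d)"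
    by (rule sum.reindex_bij_witness[where i="\<lambda>(a,b,c,d). ((a,b,c@d),(c,d))" and j="\<lambda>((a,b,x),(c,d)). (a,b,c,d)"])
       (auto simp: S3_def S2_def S4_def)
  finally show ?thesis .
qed

lemma fmul_S2: "fmul f g w = (\<Sum>(a,b)\<in>S2 w. f a * g b)"
proof -
  have "inj_on (\<lambda>i. (take i w, drop i w)) {..length w}"
    by (auto simp: inj_on_def) (metis length_take min.absorb2)
  then show ?thesis unfolding fmul_def S2_eq by (subst sum.reindex) (auto intro!: sum.cong)
qed


section \<open>Finite-support spaces\<close>

lemma Fhat_zero[simp]: "(0::'x ser) \<in> Fhat" by (simp add: Fhat_def)

lemma Fhat_add: assumes "f \<in> Fhat" "g \<in> Fhat" shows "f + g \<in> Fhat"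
  unfolding Fhat_def
proof (intro CollectI allI)
  fix n
  have "{w. length w = n \<and> (f+g) w \<noteq> 0} \<subseteq> {w. length w = n \<and> f w \<noteq> 0} \<union> {w. length w = n \<and> g w \<noteq> 0}" by auto
  moreover have "finite {w. length w = n \<and> f w \<noteq> 0}" "finite {w. length w = n \<and> g w \<noteq> 0}" using assms by (simp_all add: Fhat_def)
  ultimately show "finite {w. length w = n \<and> (f+g) w \<noteq> 0}" by (meson finite_UnI rev_finite_subset)
qed

lemma Fhat_uminus: assumes "f \<in> Fhat" shows "- f \<in> Fhat"
  using assms unfolding Fhat_def by simp

lemma Fhat_diff: assumes "f \<in> Fhat" "g \<in> Fhat" shows "f - g \<in> Fhat"
  using Fhat_add[OF assms(1) Fhat_uminus[OF assms(2)]] by simp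

lemma Fhat_smult: assumes "f \<in> Fhat" shows "(\<lambda>w. c * f w) \<in> Fhat"
  unfolding Fhat_def
proof (intro CollectI allI)
  fix n
  have "{w. length w = n \<and> c * f w \<noteq> 0} \<subseteq> {w. length w = n \<and> f w \<noteq> 0}" by auto
  moreover have "finite {w. length w = n \<and> f w \<noteq> 0}" using assms by (simp add: Fhat_def)
  ultimately show "finite {w. length w = n \<and> c * f w \<noteq> 0}" by (rule finite_subset)
qed

lemma Fhat_sum: "(\<And>i. i \<in> I \<Longrightarrow> F i \<in> Fhat) \<Longrightarrow> sum F I \<in> Fhat"
  by (induction I rule: infinite_finite_induct) (simp_all add: Fhat_add)

lemma sum_nonzeroE: assumes "(\<Sum>x\<in>A. g x) \<noteq> (0::'a::comm_monoid_add)" obtains x where "x \<in> A" "g x \<noteq> 0"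
  using assms sum.neutral by (metis (mono_tags, lifting))

lemma Fhat_fmul: assumes f: "f \<in> Fhat" and g: "g \<in> Fhat" shows "fmul f g \<in> Fhat"
  unfolding Fhat_def
proof (intro CollectI allI)
  fix n
  let ?A = "\<Union>i\<le>n. {w. length w = i \<and> f w \<noteq> 0} \<times> {w. length w = n - i \<and> g w \<noteq> 0}"
  have ff: "\<And>i. finite {w. length w = i \<and> f w \<noteq> 0}" using f by (simp add: Fhat_def)
  have gg: "\<And>i. finite {w. length w = i \<and> g w \<noteq> 0}" using g by (simp add: Fhat_def)
  have fin: "finite ?A" using ff gg by (intro finite_UN_I finite_cartesian_product) auto
  have "{w. length w = n \<and> fmul f g w \<noteq> 0} \<subseteq> (\<lambda>(a,b). a @ b) ` ?A"
  proof
    fix w assume "w \<in> {w. length w = n \<and> fmul f g w \<noteq> 0}"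
    then have n: "length w = n" and nz: "(\<Sum>(a,b)\<in>S2 w. f a * g b) \<noteq> 0" by (auto simp: fmul_S2)
    from nz obtain p where p: "p \<in> S2 w" "(case p of (a,b) \<Rightarrow> f a * g b) \<noteq> 0" by (rule sum_nonzeroE)
    obtain a b where ab: "p = (a,b)" by (cases p)
    show "w \<in> (\<lambda>(a,b). a @ b) ` ?A"
      using p n by (intro image_eqI[where x="(a,b)"]) (auto simp: ab S2_def)
  qed
  then show "finite {w. length w = n \<and> fmul f g w \<noteq> 0}" using finite_imageI[OF fin] by (rule finite_subset)
qed

lemma Rhat_zero[simp]: "(0::('x,'q) rser) \<in> Rhat" by (simp add: Rhat_def)

lemma Rhat_add: assumes "f \<in> Rhat" "g \<in> Rhat" shows "f + g \<in> Rhat"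
  unfolding Rhat_def
proof (intro CollectI allI)
  fix n
  have "{w. rdeg w = n \<and> (f+g) w \<noteq> 0} \<subseteq> {w. rdeg w = n \<and> f w \<noteq> 0} \<union> {w. rdeg w = n \<and> g w \<noteq> 0}" by auto
  moreover have "finite {w. rdeg w = n \<and> f w \<noteq> 0}" "finite {w. rdeg w = n \<and> g w \<noteq> 0}" using assms by (simp_all add: Rhat_def)
  ultimately show "finite {w. rdeg w = n \<and> (f+g) w \<noteq> 0}" by (meson finite_UnI rev_finite_subset)
qed

lemma Rhat_uminus: assumes "f \<in> Rhat" shows "- f \<in> Rhat"
  using assms unfolding Rhat_def by simp

lemma Rhat_diff: assumes "f \<in> Rhat" "g \<in> Rhat" shows "f - g \<in> Rhat"
  using Rhat_add[OF assms(1) Rhat_uminus[OF assms(2)]] by simp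

lemma Rhat_smult: assumes "f \<in> Rhat" shows "(\<lambda>w. c * f w) \<in> Rhat"
  unfolding Rhat_def
proof (intro CollectI allI)
  fix n
  have "{w. rdeg w = n \<and> c * f w \<noteq> 0} \<subseteq> {w. rdeg w = n \<and> f w \<noteq> 0}" by auto
  moreover have "finite {w. rdeg w = n \<and> f w \<noteq> 0}" using assms by (simp add: Rhat_def)
  ultimately show "finite {w. rdeg w = n \<and> c * f w \<noteq> 0}" by (rule finite_subset)
qed

lemma Rhat_sum: "(\<And>i. i \<in> I \<Longrightarrow> F i \<in> Rhat) \<Longrightarrow> sum F I \<in> Rhat"
  by (induction I rule: infinite_finite_induct) (simp_all add: Rhat_add)

definition Qs :: "('x,'q) rser \<Rightarrow> 'x list \<Rightarrow> 'x list \<Rightarrow> 'q set" where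
  "Qs r u v = {q. r (u,q,v) \<noteq> 0}"

lemma finite_Qs: assumes "r \<in> Rhat" shows "finite (Qs r u v)"
proof -
  have "Qs r u v \<subseteq> (\<lambda>b. fst (snd b)) ` {b. rdeg b = length u + length v + 2 \<and> r b \<noteq> 0}"
  proof
    fix q assume "q \<in> Qs r u v"
    then show "q \<in> (\<lambda>b. fst (snd b)) ` {b. rdeg b = length u + length v + 2 \<and> r b \<noteq> 0}"
      by (intro image_eqI[where x="(u,q,v)"]) (simp_all add: Qs_def rdeg_def)
  qed
  moreover have "finite {b. rdeg b = length u + length v + 2 \<and> r b \<noteq> 0}" using assms by (simp add: Rhat_def)
  ultimately show ?thesis using finite_imageI finite_subset by blast
qed

definition qsum :: "('q \<Rightarrow> 'x ser) \<Rightarrow> ('x,'q) rser \<Rightarrow> 'x list \<Rightarrow> 'x list \<Rightarrow> 'x list \<Rightarrow> rat" where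
  "qsum y r u v m = (\<Sum>q\<in>Qs r u v. r (u,q,v) * y q m)"

lemma qsum_superset: assumes "finite Q" "Qs r u v \<subseteq> Q"
  shows "qsum y r u v m = (\<Sum>q\<in>Q. r (u,q,v) * y q m)"
  unfolding qsum_def using assms by (intro sum.mono_neutral_left) (auto simp: Qs_def)

lemma list_split3: assumes "length u + length v \<le> length w" "take (length u) w = u" "drop (length w - length v) w = v"
  shows "u @ drop (length u) (take (length w - length v) w) @ v = w"
proof -
  have le: "length u \<le> length w - length v" using assms(1) by arith
  have "take (length u) (take (length w - length v) w) = u" using assms(2) le by (simp add: take_take min_absorb1)
  then have "u @ drop (length u) (take (length w - length v) w) = take (length w - length v) w"
    by (metis append_take_drop_id)
  then show ?thesis using assms(3) by (metis append.assoc append_take_drop_id)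
qed

lemma dK_S3: assumes "r \<in> Rhat" shows "dK y r w = (\<Sum>(u,m,v)\<in>S3 w. qsum y r u v m)"
proof -
  have "(\<Sum>(u,m,v)\<in>S3 w. qsum y r u v m) = (\<Sum>x\<in>S3 w. \<Sum>q\<in>Qs r (fst x) (snd (snd x)). r (fst x, q, snd (snd x)) * y q (fst (snd x)))"
    by (simp add: qsum_def split_def)
  also have "\<dots> = (\<Sum>p\<in>Sigma (S3 w) (\<lambda>x. Qs r (fst x) (snd (snd x))). r (fst (fst p), snd p, snd (snd (fst p))) * y (snd p) (fst (snd (fst p))))"
    by (rule sum_Sigma_fs) (auto intro: finite_Qs[OF assms])
  also have "\<dots> = dK y r w"
    unfolding dK_def
    apply (rule sum.reindex_bij_witness[where i="\<lambda>(u,q,v). ((u, drop (length u) (take (length w - length v) w), v), q)"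
          and j="\<lambda>((u,m,v),q). (u,q,v)"])
    subgoal for a by (cases a) (clarsimp simp: S3_def)
    subgoal for a by (cases a) (clarsimp simp: S3_def Qs_def)
    subgoal for b by (cases b) clarsimp
    subgoal for b by (cases b) (clarsimp simp: S3_def Qs_def list_split3)
    subgoal for a by (cases a) (clarsimp simp: S3_def)
    done
  finally show ?thesis by simp
qed


lemma qsum_add: assumes "r1 \<in> Rhat" "r2 \<in> Rhat"
  shows "qsum y (r1 + r2) u v m = qsum y r1 u v m + qsum y r2 u v m"
proof -
  let ?Q = "Qs r1 u v \<union> Qs r2 u v"
  have fQ: "finite ?Q" using finite_Qs assms by blast
  have "qsum y (r1 + r2) u v m = (\<Sum>q\<in>?Q. (r1 + r2) (u,q,v) * y q m)"
    by (rule qsum_superset[OF fQ]) (auto simp: Qs_def)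
  also have "\<dots> = (\<Sum>q\<in>?Q. r1 (u,q,v) * y q m) + (\<Sum>q\<in>?Q. r2 (u,q,v) * y q m)"
    by (simp add: distrib_right sum.distrib)
  also have "\<dots> = qsum y r1 u v m + qsum y r2 u v m"
    using qsum_superset[OF fQ, of r1] qsum_superset[OF fQ, of r2] by auto
  finally show ?thesis .
qed

lemma qsum_smult: assumes "r \<in> Rhat"
  shows "qsum y (\<lambda>b. c * r b) u v m = c * qsum y r u v m"
proof -
  have fQ: "finite (Qs r u v)" using finite_Qs assms by blast
  have "qsum y (\<lambda>b. c * r b) u v m = (\<Sum>q\<in>Qs r u v. c * r (u,q,v) * y q m)"
    by (rule qsum_superset[OF fQ]) (auto simp: Qs_def)
  also have "\<dots> = c * qsum y r u v m" by (simp add: qsum_def sum_distrib_left mult.assoc)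
  finally show ?thesis .
qed

lemma qsum_zero[simp]: "qsum y 0 u v m = 0" by (simp add: qsum_def Qs_def)

lemma dK_add: assumes "r1 \<in> Rhat" "r2 \<in> Rhat" shows "dK y (r1 + r2) = dK y r1 + dK y r2"
proof
  fix w show "dK y (r1 + r2) w = (dK y r1 + dK y r2) w"
    using assms by (simp add: dK_S3 Rhat_add qsum_add split_def sum.distrib)
qed

lemma dK_smult: assumes "r \<in> Rhat" shows "dK y (\<lambda>b. c * r b) = (\<lambda>w. c * dK y r w)"
proof
  fix w show "dK y (\<lambda>b. c * r b) w = c * dK y r w"
    using assms by (simp add: dK_S3 Rhat_smult qsum_smult split_def sum_distrib_left)
qed

lemma dK_zero[simp]: "dK y 0 = 0"
  by (rule ext) (simp add: dK_S3)

lemma dK_uminus: assumes "r \<in> Rhat" shows "dK y (- r) = - dK y r"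
proof -
  have "- r = (\<lambda>b. (-1) * r b)" by auto
  show ?thesis unfolding \<open>- r = (\<lambda>b. (-1) * r b)\<close> dK_smult[OF assms] by (simp add: fun_eq_iff)
qed

lemma dK_diff: assumes "r1 \<in> Rhat" "r2 \<in> Rhat" shows "dK y (r1 - r2) = dK y r1 - dK y r2"
  using dK_add[OF assms(1) Rhat_uminus[OF assms(2)]] dK_uminus[OF assms(2)] by simp

lemma dK_sum: assumes "\<And>i. i \<in> I \<Longrightarrow> F i \<in> Rhat" shows "dK y (sum F I) = (\<Sum>i\<in>I. dK y (F i))"
  using assms
proof (induction I rule: infinite_finite_induct)
  case (insert i I)
  have e1: "sum F (insert i I) = F i + sum F I" using insert(1,2) by (rule sum.insert)
  have e2: "(\<Sum>i\<in>insert i I. dK y (F i)) = dK y (F i) + (\<Sum>i\<in>I. dK y (F i))" using insert(1,2) by (rule sum.insert)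
  have "dK y (F i + sum F I) = dK y (F i) + dK y (sum F I)" using insert by (intro dK_add Rhat_sum) auto
  moreover have ih: "dK y (sum F I) = (\<Sum>i\<in>I. dK y (F i))" using insert by blast
  ultimately show ?case unfolding e1 e2 by metis
qed auto

section \<open>Bimodule structure\<close>

definition lmul :: "'x ser \<Rightarrow> ('x,'q) rser \<Rightarrow> ('x,'q) rser" where
  "lmul f r = (\<lambda>(u,q,v). \<Sum>(a,b)\<in>S2 u. f a * r (b,q,v))"
definition rmul :: "('x,'q) rser \<Rightarrow> 'x ser \<Rightarrow> ('x,'q) rser" where
  "rmul r g = (\<lambda>(u,q,v). \<Sum>(c,d)\<in>S2 v. r (u,q,c) * g d)"

lemma lmul_apply: "lmul f r (u,q,v) = (\<Sum>(a,b)\<in>S2 u. f a * r (b,q,v))" by (simp add: lmul_def)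
lemma rmul_apply: "rmul r g (u,q,v) = (\<Sum>(c,d)\<in>S2 v. r (u,q,c) * g d)" by (simp add: rmul_def)

lemma Rhat_lmul: assumes f: "f \<in> Fhat" and r: "r \<in> Rhat" shows "lmul f r \<in> Rhat"
  unfolding Rhat_def
proof (intro CollectI allI)
  fix n
  let ?A = "\<Union>i\<le>n. {w. length w = i \<and> f w \<noteq> 0} \<times> {b. rdeg b = n - i \<and> r b \<noteq> 0}"
  have ff: "\<And>i. finite {w. length w = i \<and> f w \<noteq> 0}" using f by (simp add: Fhat_def)
  have rr: "\<And>i. finite {b. rdeg b = i \<and> r b \<noteq> 0}" using r by (simp add: Rhat_def)
  have fin: "finite ?A" using ff rr by (intro finite_UN_I finite_cartesian_product) auto
  have "{b. rdeg b = n \<and> lmul f r b \<noteq> 0} \<subseteq> (\<lambda>(a,(b,q,v)). (a @ b, q, v)) ` ?A"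
  proof
    fix t assume "t \<in> {b. rdeg b = n \<and> lmul f r b \<noteq> 0}"
    moreover obtain u q v where t: "t = (u,q,v)" by (cases t)
    ultimately have n: "rdeg (u,q,v) = n" and nz: "(\<Sum>(a,b)\<in>S2 u. f a * r (b,q,v)) \<noteq> 0"
      by (auto simp: lmul_apply)
    from nz obtain p where p: "p \<in> S2 u" "(case p of (a,b) \<Rightarrow> f a * r (b,q,v)) \<noteq> 0" by (rule sum_nonzeroE)
    obtain a b where ab: "p = (a,b)" by (cases p)
    show "t \<in> (\<lambda>(a,(b,q,v)). (a @ b, q, v)) ` ?A"
      using p n unfolding t by (intro image_eqI[where x="(a,(b,q,v))"]) (auto simp: ab S2_def rdeg_def)
  qed
  then show "finite {b. rdeg b = n \<and> lmul f r b \<noteq> 0}" using finite_imageI[OF fin] by (rule finite_subset)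
qed

lemma Rhat_rmul: assumes g: "g \<in> Fhat" and r: "r \<in> Rhat" shows "rmul r g \<in> Rhat"
  unfolding Rhat_def
proof (intro CollectI allI)
  fix n
  let ?A = "\<Union>i\<le>n. {b. rdeg b = n - i \<and> r b \<noteq> 0} \<times> {w. length w = i \<and> g w \<noteq> 0}"
  have gg: "\<And>i. finite {w. length w = i \<and> g w \<noteq> 0}" using g by (simp add: Fhat_def)
  have rr: "\<And>i. finite {b. rdeg b = i \<and> r b \<noteq> 0}" using r by (simp add: Rhat_def)
  have fin: "finite ?A" using gg rr by (intro finite_UN_I finite_cartesian_product) auto
  have "{b. rdeg b = n \<and> rmul r g b \<noteq> 0} \<subseteq> (\<lambda>((u,q,c),d). (u, q, c @ d)) ` ?A"
  proof
    fix t assume "t \<in> {b. rdeg b = n \<and> rmul r g b \<noteq> 0}"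
    moreover obtain u q v where t: "t = (u,q,v)" by (cases t)
    ultimately have n: "rdeg (u,q,v) = n" and nz: "(\<Sum>(c,d)\<in>S2 v. r (u,q,c) * g d) \<noteq> 0"
      by (auto simp: rmul_apply)
    from nz obtain p where p: "p \<in> S2 v" "(case p of (c,d) \<Rightarrow> r (u,q,c) * g d) \<noteq> 0" by (rule sum_nonzeroE)
    obtain c d where cd: "p = (c,d)" by (cases p)
    show "t \<in> (\<lambda>((u,q,c),d). (u, q, c @ d)) ` ?A"
      using p n unfolding t by (intro image_eqI[where x="((u,q,c),d)"]) (auto simp: cd S2_def rdeg_def)
  qed
  then show "finite {b. rdeg b = n \<and> rmul r g b \<noteq> 0}" using finite_imageI[OF fin] by (rule finite_subset)
qed

lemma qsum_lmul: assumes r: "r \<in> Rhat"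
  shows "qsum y (lmul f r) u v m = (\<Sum>(a,b)\<in>S2 u. f a * qsum y r b v m)"
proof -
  let ?Q = "\<Union>p\<in>S2 u. Qs r (snd p) v"
  have fQ: "finite ?Q" using finite_Qs[OF r] by auto
  have sub: "Qs (lmul f r) u v \<subseteq> ?Q"
  proof
    fix q assume "q \<in> Qs (lmul f r) u v"
    then have "(\<Sum>(a,b)\<in>S2 u. f a * r (b,q,v)) \<noteq> 0" by (simp add: Qs_def lmul_apply)
    then obtain p where "p \<in> S2 u" "(case p of (a,b) \<Rightarrow> f a * r (b,q,v)) \<noteq> 0" by (rule sum_nonzeroE)
    then show "q \<in> ?Q" by (cases p) (force simp: Qs_def)
  qed
  have "qsum y (lmul f r) u v m = (\<Sum>q\<in>?Q. (\<Sum>(a,b)\<in>S2 u. f a * r (b,q,v)) * y q m)"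
    by (subst qsum_superset[OF fQ sub]) (simp add: lmul_apply)
  also have "\<dots> = (\<Sum>(a,b)\<in>S2 u. f a * (\<Sum>q\<in>?Q. r (b,q,v) * y q m))"
    by (simp add: sum_distrib_left sum_distrib_right split_def mult.assoc sum.swap[where B="S2 u"])
  also have "\<dots> = (\<Sum>(a,b)\<in>S2 u. f a * qsum y r b v m)"
  proof (rule sum.cong[OF refl])
    fix p assume p: "p \<in> S2 u"
    obtain a b where ab: "p = (a,b)" by (cases p)
    have "Qs r b v \<subseteq> ?Q" using p ab by force
    from qsum_superset[OF fQ this] show "(case p of (a,b) \<Rightarrow> f a * (\<Sum>q\<in>?Q. r (b,q,v) * y q m)) = (case p of (a,b) \<Rightarrow> f a * qsum y r b v m)"
      using ab by simp
  qed
  finally show ?thesis .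
qed

lemma qsum_rmul: assumes r: "r \<in> Rhat"
  shows "qsum y (rmul r g) u v m = (\<Sum>(c,d)\<in>S2 v. qsum y r u c m * g d)"
proof -
  let ?Q = "\<Union>p\<in>S2 v. Qs r u (fst p)"
  have fQ: "finite ?Q" using finite_Qs[OF r] by auto
  have sub: "Qs (rmul r g) u v \<subseteq> ?Q"
  proof
    fix q assume "q \<in> Qs (rmul r g) u v"
    then have "(\<Sum>(c,d)\<in>S2 v. r (u,q,c) * g d) \<noteq> 0" by (simp add: Qs_def rmul_apply)
    then obtain p where "p \<in> S2 v" "(case p of (c,d) \<Rightarrow> r (u,q,c) * g d) \<noteq> 0" by (rule sum_nonzeroE)
    then show "q \<in> ?Q" by (cases p) (force simp: Qs_def)
  qed
  have "qsum y (rmul r g) u v m = (\<Sum>q\<in>?Q. (\<Sum>(c,d)\<in>S2 v. r (u,q,c) * g d) * y q m)"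
    by (subst qsum_superset[OF fQ sub]) (simp add: rmul_apply)
  also have "\<dots> = (\<Sum>(c,d)\<in>S2 v. (\<Sum>q\<in>?Q. r (u,q,c) * y q m) * g d)"
    by (simp add: sum_distrib_left sum_distrib_right split_def mult.assoc mult.commute mult.left_commute sum.swap[where B="S2 v"])
  also have "\<dots> = (\<Sum>(c,d)\<in>S2 v. qsum y r u c m * g d)"
  proof (rule sum.cong[OF refl])
    fix p assume p: "p \<in> S2 v"
    obtain c d where cd: "p = (c,d)" by (cases p)
    have "Qs r u c \<subseteq> ?Q" using p cd by force
    from qsum_superset[OF fQ this] show "(case p of (c,d) \<Rightarrow> (\<Sum>q\<in>?Q. r (u,q,c) * y q m) * g d) = (case p of (c,d) \<Rightarrow> qsum y r u c m * g d)"
      using cd by simp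
  qed
  finally show ?thesis .
qed

lemma dK_lmul: assumes f: "f \<in> Fhat" and r: "r \<in> Rhat" shows "dK y (lmul f r) = fmul f (dK y r)"
proof
  fix w
  have "dK y (lmul f r) w = (\<Sum>(u,m,v)\<in>S3 w. \<Sum>(a,b)\<in>S2 u. f a * qsum y r b v m)"
    by (simp add: dK_S3[OF Rhat_lmul[OF f r]] qsum_lmul[OF r])
  also have "\<dots> = (\<Sum>(a,b,m,v)\<in>S4 w. f a * qsum y r b v m)"
    by (rule sum_S3_S2_first)
  also have "\<dots> = (\<Sum>(a,c)\<in>S2 w. \<Sum>(b,m,v)\<in>S3 c. f a * qsum y r b v m)"
    by (rule sum_S2_S3_right[symmetric])
  also have "\<dots> = fmul f (dK y r) w"
    by (simp add: fmul_S2 dK_S3[OF r] sum_distrib_left split_def)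
  finally show "dK y (lmul f r) w = fmul f (dK y r) w" .
qed

lemma dK_rmul: assumes g: "g \<in> Fhat" and r: "r \<in> Rhat" shows "dK y (rmul r g) = fmul (dK y r) g"
proof
  fix w
  have "dK y (rmul r g) w = (\<Sum>(u,m,v)\<in>S3 w. \<Sum>(c,d)\<in>S2 v. qsum y r u c m * g d)"
    by (simp add: dK_S3[OF Rhat_rmul[OF g r]] qsum_rmul[OF r])
  also have "\<dots> = (\<Sum>(u,m,c,d)\<in>S4 w. qsum y r u c m * g d)"
    by (rule sum_S3_S2_last)
  also have "\<dots> = (\<Sum>(a,d)\<in>S2 w. \<Sum>(u,m,c)\<in>S3 a. qsum y r u c m * g d)"
    by (rule sum_S2_S3_left[symmetric])
  also have "\<dots> = fmul (dK y r) g w"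
    by (simp add: fmul_S2 dK_S3[OF r] sum_distrib_right split_def)
  finally show "dK y (rmul r g) w = fmul (dK y r) g w" .
qed


lemma IF_Fhat: "f \<in> IF p \<Longrightarrow> f \<in> Fhat" by (simp add: IF_def)
lemma Xt_Fhat: "f \<in> Xt p \<Longrightarrow> f \<in> Fhat" by (simp add: Xt_def)
lemma Xt_IF: "f \<in> Xt p \<Longrightarrow> f \<in> IF p" by (auto simp: Xt_def IF_def)
lemma IF_zero[simp]: "0 \<in> IF p" by (simp add: IF_def)
lemma IF_add: "f \<in> IF p \<Longrightarrow> g \<in> IF p \<Longrightarrow> f + g \<in> IF p" by (auto simp: IF_def Fhat_add Fhat_diff Fhat_uminus)
lemma IF_uminus: "f \<in> IF p \<Longrightarrow> - f \<in> IF p" by (auto simp: IF_def Fhat_add Fhat_diff Fhat_uminus)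
lemma IF_diff: "f \<in> IF p \<Longrightarrow> g \<in> IF p \<Longrightarrow> f - g \<in> IF p" by (auto simp: IF_def Fhat_add Fhat_diff Fhat_uminus)
lemma IF_mono: "f \<in> IF p \<Longrightarrow> k \<le> p \<Longrightarrow> f \<in> IF k" by (auto simp: IF_def)
lemma Xt_zero[simp]: "0 \<in> Xt p" by (simp add: Xt_def)
lemma Xt_add: "f \<in> Xt p \<Longrightarrow> g \<in> Xt p \<Longrightarrow> f + g \<in> Xt p" by (auto simp: Xt_def Fhat_add Fhat_diff Fhat_uminus)
lemma Xt_diff: "f \<in> Xt p \<Longrightarrow> g \<in> Xt p \<Longrightarrow> f - g \<in> Xt p" by (auto simp: Xt_def Fhat_add Fhat_diff Fhat_uminus)
lemma pi0_Xt: "f \<in> Fhat \<Longrightarrow> pi0 p f \<in> Xt p"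
proof -
  assume f: "f \<in> Fhat"
  have "pi0 p f \<in> Fhat" unfolding Fhat_def
  proof (intro CollectI allI)
    fix n
    have "{w. length w = n \<and> pi0 p f w \<noteq> 0} \<subseteq> {w. length w = n \<and> f w \<noteq> 0}" by (auto simp: pi0_def)
    moreover have "finite {w. length w = n \<and> f w \<noteq> 0}" using f by (simp add: Fhat_def)
    ultimately show "finite {w. length w = n \<and> pi0 p f w \<noteq> 0}" by (rule finite_subset)
  qed
  then show ?thesis by (simp add: Xt_def pi0_def)
qed
lemma IF_pi0_rest: "f \<in> IF p \<Longrightarrow> f - pi0 p f \<in> IF (Suc p)"
proof -
  assume f: "f \<in> IF p"
  then have "pi0 p f \<in> Fhat" using pi0_Xt IF_Fhat Xt_Fhat by blast
  then have "f - pi0 p f \<in> Fhat" using f IF_Fhat Fhat_diff by blast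
  then show ?thesis using f by (auto simp: IF_def pi0_def)
qed
lemma Xt_pi0: "f \<in> Xt p \<Longrightarrow> pi0 p f = f" by (auto simp: Xt_def pi0_def)
lemma pi0_diff: "pi0 p (f - g) = pi0 p f - pi0 p g" by (auto simp: pi0_def)
lemma pi0_add: "pi0 p (f + g) = pi0 p f + pi0 p g" by (auto simp: pi0_def)
lemma pi0_IF_Suc: "f \<in> IF (Suc p) \<Longrightarrow> pi0 p f = 0" by (auto simp: pi0_def IF_def)

lemma Rge_Rhat: "r \<in> Rge p \<Longrightarrow> r \<in> Rhat" by (simp add: Rge_def)
lemma Rdeg_Rhat: "r \<in> Rdeg p \<Longrightarrow> r \<in> Rhat" by (simp add: Rdeg_def)
lemma Rdeg_Rge: "r \<in> Rdeg p \<Longrightarrow> r \<in> Rge p" by (auto simp: Rdeg_def Rge_def)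
lemma rdeg_ge2: "rdeg b \<ge> 2" by (simp add: rdeg_def)
lemma Rge_le2: fixes r :: "('x,'q) rser" shows "r \<in> Rhat \<Longrightarrow> p \<le> 2 \<Longrightarrow> r \<in> Rge p"
proof -
  assume "r \<in> Rhat" "p \<le> 2"
  moreover have "\<forall>b. rdeg b < p \<longrightarrow> r b = 0"
  proof (intro allI impI)
    fix b :: "'x list \<times> 'q \<times> 'x list" assume "rdeg b < p" then show "r b = 0" using rdeg_ge2[of b] \<open>p \<le> 2\<close> by linarith
  qed
  ultimately show ?thesis by (simp add: Rge_def)
qed
lemma pi1_Rdeg: assumes "r \<in> Rhat" shows "pi1 p r \<in> Rdeg p"
proof -
  have "pi1 p r \<in> Rhat" unfolding Rhat_def
  proof (intro CollectI allI)
    fix n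
    have "{b. rdeg b = n \<and> pi1 p r b \<noteq> 0} \<subseteq> {b. rdeg b = n \<and> r b \<noteq> 0}" by (auto simp: pi1_def)
    moreover have "finite {b. rdeg b = n \<and> r b \<noteq> 0}" using assms by (simp add: Rhat_def)
    ultimately show "finite {b. rdeg b = n \<and> pi1 p r b \<noteq> 0}" by (rule finite_subset)
  qed
  then show ?thesis by (simp add: Rdeg_def pi1_def)
qed
lemma Rdeg_pi1: "r \<in> Rdeg p \<Longrightarrow> pi1 p r = r" by (auto simp: Rdeg_def pi1_def)
lemma Rge_rest: "r \<in> Rge p \<Longrightarrow> r - pi1 p r \<in> Rge (Suc p)"
proof -
  assume r: "r \<in> Rge p"
  then have "r - pi1 p r \<in> Rhat" using pi1_Rdeg Rdeg_Rhat Rge_Rhat Rhat_diff by blast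
  then show ?thesis using r by (auto simp: Rge_def pi1_def)
qed
lemma Rge_diff: "r \<in> Rge p \<Longrightarrow> s \<in> Rge p \<Longrightarrow> r - s \<in> Rge p" by (auto simp: Rge_def Rhat_diff)
lemma Rge_add: "r \<in> Rge p \<Longrightarrow> s \<in> Rge p \<Longrightarrow> r + s \<in> Rge p" by (auto simp: Rge_def Rhat_add)
lemma Rdeg_diff: "r \<in> Rdeg p \<Longrightarrow> s \<in> Rdeg p \<Longrightarrow> r - s \<in> Rdeg p" by (auto simp: Rdeg_def Rhat_diff)
lemma Rdeg_add: "r \<in> Rdeg p \<Longrightarrow> s \<in> Rdeg p \<Longrightarrow> r + s \<in> Rdeg p" by (auto simp: Rdeg_def Rhat_add)
lemma Rdeg_zero[simp]: "0 \<in> Rdeg p" by (simp add: Rdeg_def)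
lemma Rge_zero[simp]: "0 \<in> Rge p" by (simp add: Rge_def)

context
  fixes y :: "'q \<Rightarrow> 'x ser"
  assumes y2: "\<forall>q. y q \<in> IF 2"
begin

lemma y_Fhat: "y q \<in> Fhat" using y2 IF_Fhat by blast

lemma dK_Fhat: assumes r: "r \<in> Rhat" shows "dK y r \<in> Fhat"
  unfolding Fhat_def
proof (intro CollectI allI)
  fix n
  let ?B = "\<Union>k\<le>n+2. {b. rdeg b = k \<and> r b \<noteq> 0}"
  let ?C = "Sigma ?B (\<lambda>(u,q,v). {m. length m = n - length u - length v \<and> y q m \<noteq> 0})"
  have finB: "finite ?B" using r by (auto simp: Rhat_def)
  have finC: "finite ?C"
  proof (rule finite_SigmaI[OF finB])
    fix b assume "b \<in> ?B"
    obtain u q v where b: "b = (u,q,v)" by (cases b)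
    have "finite {m. length m = n - length u - length v \<and> y q m \<noteq> 0}" using y_Fhat[of q] by (simp add: Fhat_def)
    then show "finite (case b of (u,q,v) \<Rightarrow> {m. length m = n - length u - length v \<and> y q m \<noteq> 0})" by (simp add: b)
  qed
  have "{w. length w = n \<and> dK y r w \<noteq> 0} \<subseteq> (\<lambda>((u,q,v),m). u @ m @ v) ` ?C"
  proof
    fix w assume "w \<in> {w. length w = n \<and> dK y r w \<noteq> 0}"
    then have n: "length w = n" and nz: "(\<Sum>(u,m,v)\<in>S3 w. qsum y r u v m) \<noteq> 0" by (auto simp: dK_S3[OF r])
    from nz obtain t where t: "t \<in> S3 w" "(case t of (u,m,v) \<Rightarrow> qsum y r u v m) \<noteq> 0" by (rule sum_nonzeroE)
    obtain u m v where tt: "t = (u,m,v)" by (cases t)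
    from t have w: "w = u @ m @ v" and nz2: "qsum y r u v m \<noteq> 0" by (auto simp: tt S3_def)
    from nz2 obtain q where q: "q \<in> Qs r u v" "r (u,q,v) * y q m \<noteq> 0" unfolding qsum_def by (rule sum_nonzeroE)
    show "w \<in> (\<lambda>((u,q,v),m). u @ m @ v) ` ?C"
      using q n w by (intro image_eqI[where x="((u,q,v),m)"]) (auto simp: Qs_def rdeg_def)
  qed
  then show "finite {w. length w = n \<and> dK y r w \<noteq> 0}" using finite_imageI[OF finC] by (rule finite_subset)
qed

lemma dK_IF: assumes r: "r \<in> Rge p" shows "dK y r \<in> IF p"
proof -
  have rr: "r \<in> Rhat" using r Rge_Rhat by blast
  have "dK y r w = 0" if w: "length w < p" for w
  proof -
    have "qsum y r u v m = 0" if t: "(u,m,v) \<in> S3 w" for u m v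
    proof -
      have "r (u,q,v) * y q m = 0" for q
      proof (cases "r (u,q,v) = 0")
        case False
        then have "rdeg (u,q,v) \<ge> p" using r by (force simp: Rge_def)
        then have "length m < 2" using t w by (auto simp: S3_def rdeg_def)
        then have "y q m = 0" using y2 by (auto simp: IF_def)
        then show ?thesis by simp
      qed simp
      then show ?thesis unfolding qsum_def by (intro sum.neutral) blast
    qed
    then show ?thesis by (simp add: dK_S3[OF rr] split_def)
  qed
  then show ?thesis using dK_Fhat[OF rr] by (simp add: IF_def)
qed

lemma dK_pi: assumes r: "r \<in> Rge p" shows "pi0 p (dK y r) = dA y p (pi1 p r)"
proof -
  have rr: "r \<in> Rhat" using r Rge_Rhat by blast
  have p1: "pi1 p r \<in> Rhat" using pi1_Rdeg[OF rr] Rdeg_Rhat by blast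
  have "dK y r = dK y (pi1 p r) + dK y (r - pi1 p r)"
    using dK_add[OF p1 Rhat_diff[OF rr p1]] by simp
  moreover have "pi0 p (dK y (r - pi1 p r)) = 0" using dK_IF[OF Rge_rest[OF r]] pi0_IF_Suc by blast
  ultimately show ?thesis by (simp add: pi0_add dA_def)
qed

lemma dA_diff: assumes "r \<in> Rdeg p" "s \<in> Rdeg p" shows "dA y p (r - s) = dA y p r - dA y p s"
  using assms by (simp add: dA_def dK_diff Rdeg_Rhat pi0_diff)

lemma JA_diff: assumes "a \<in> JA y p" "b \<in> JA y p" shows "a - b \<in> JA y p"
proof -
  obtain r s where r: "r \<in> Rdeg p" "a = dA y p r" and s: "s \<in> Rdeg p" "b = dA y p s"
    using assms unfolding JA_def by blast
  then have "a - b = dA y p (r - s)" by (simp add: dA_diff)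
  then show ?thesis unfolding JA_def using Rdeg_diff[OF r(1) s(1)] by blast
qed

lemma JA_zero[simp]: "0 \<in> JA y p"
proof -
  have "dA y p 0 = 0" by (simp add: dA_def pi0_def fun_eq_iff)
  then show ?thesis unfolding JA_def using Rdeg_zero by (metis image_eqI)
qed

lemma JA_Xt: assumes "a \<in> JA y p" shows "a \<in> Xt p"
proof -
  obtain r where r: "r \<in> Rdeg p" "a = dA y p r" using assms unfolding JA_def by blast
  then show ?thesis unfolding dA_def using pi0_Xt dK_Fhat Rdeg_Rhat by blast
qed

lemma Mid_diff: assumes "a \<in> Mid y" "b \<in> Mid y" shows "a - b \<in> Mid y"
proof -
  obtain r s where r: "r \<in> Rhat" "a = dK y r" and s: "s \<in> Rhat" "b = dK y s"
    using assms unfolding Mid_def by blast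
  then have "a - b = dK y (r - s)" by (simp add: dK_diff)
  then show ?thesis unfolding Mid_def using Rhat_diff[OF r(1) s(1)] by blast
qed

lemma Mid_add: assumes "a \<in> Mid y" "b \<in> Mid y" shows "a + b \<in> Mid y"
proof -
  obtain r s where r: "r \<in> Rhat" "a = dK y r" and s: "s \<in> Rhat" "b = dK y s"
    using assms unfolding Mid_def by blast
  then have "a + b = dK y (r + s)" by (simp add: dK_add)
  then show ?thesis unfolding Mid_def using Rhat_add[OF r(1) s(1)] by blast
qed

lemma Mid_zero[simp]: "0 \<in> Mid y"
  unfolding Mid_def using Rhat_zero dK_zero by (metis image_eqI)

lemma Mid_Fhat: "a \<in> Mid y \<Longrightarrow> a \<in> Fhat"
  unfolding Mid_def using dK_Fhat by blast

end


lemma fsub_eq[simp]: "fsub f g = f - g" by (auto simp: fsub_def fun_eq_iff)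
lemma fzero_eq[simp]: "fzero = 0" by (auto simp: fzero_def fun_eq_iff)
lemma fadd_eq[simp]: "fadd f g = f + g" by (auto simp: fadd_def fun_eq_iff)

context
  fixes y :: "'q \<Rightarrow> 'x ser"
  assumes y2: "\<forall>q. y q \<in> IF 2"
begin

lemma lift_lemma:
  assumes surj: "\<forall>k. 2 \<le> k \<and> k < m \<longrightarrow> syz_surj y k" and r: "r \<in> Rhat"
    and van: "\<forall>w. length w < m \<longrightarrow> dK y r w = 0"
  shows "\<exists>r'\<in>Rge m. dK y r' = dK y r"
proof -
  have "\<forall>k. k \<le> m \<longrightarrow> (\<exists>r'\<in>Rge k. dK y r' = dK y r)"
  proof (intro allI)
    fix k show "k \<le> m \<longrightarrow> (\<exists>r'\<in>Rge k. dK y r' = dK y r)"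
    proof (induction k)
      case 0 then show ?case using Rge_le2[OF r] by auto
    next
      case (Suc k)
      show ?case
      proof
        assume km: "Suc k \<le> m"
        show "\<exists>r'\<in>Rge (Suc k). dK y r' = dK y r"
        proof (cases "Suc k \<le> 2")
          case True then show ?thesis using Rge_le2[OF r] by auto
        next
          case False
          then have k2: "2 \<le> k" and kl: "k < m" using km by auto
          obtain r' where r': "r' \<in> Rge k" "dK y r' = dK y r" using Suc km by auto
          have r'h: "r' \<in> Rhat" using r' Rge_Rhat by blast
          let ?s = "pi1 k r'"
          have sdeg: "?s \<in> Rdeg k" using pi1_Rdeg[OF r'h] .
          have "dA y k ?s = pi0 k (dK y r)" using dK_pi[OF y2 r'(1)] r'(2) by simp
          also have "\<dots> = 0" using van kl by (auto simp: pi0_def fun_eq_iff)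
          finally have "?s \<in> kerA y k" using sdeg by (simp add: kerA_def)
          then obtain r'' where r'': "r'' \<in> kerK y k" "pi1 k r'' = ?s"
            using surj k2 kl unfolding syz_surj_def by blast
          have r''g: "r'' \<in> Rge k" and r''0: "dK y r'' = 0" using r'' by (auto simp: kerK_def)
          have "r' - r'' \<in> Rge (Suc k)"
          proof -
            have "r' - r'' \<in> Rhat" using r'h r''g Rge_Rhat Rhat_diff by blast
            moreover have "(r' - r'') b = 0" if "rdeg b < Suc k" for b
            proof (cases "rdeg b < k")
              case True then show ?thesis using r'(1) r''g by (cases b) (auto simp: Rge_def)
            next
              case False
              then have "rdeg b = k" using that by simp
              then have "r' b = r'' b" using fun_cong[OF r''(2), of b] by (simp add: pi1_def)
              then show ?thesis by simp
            qed
            ultimately show ?thesis by (simp add: Rge_def)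
          qed
          moreover have "dK y (r' - r'') = dK y r"
            using dK_diff[OF r'h Rge_Rhat[OF r''g], of y] r''0 r'(2) by simp
          ultimately show ?thesis by blast
        qed
      qed
    qed
  qed
  then show ?thesis by blast
qed

lemma key_lemma:
  assumes surj: "\<forall>k. 2 \<le> k \<and> k < m \<longrightarrow> syz_surj y k"
    and v: "v \<in> Xt m" and h: "h \<in> IF (Suc m)" and M: "v - h \<in> Mid y"
  shows "v \<in> JA y m"
proof -
  obtain r where r: "r \<in> Rhat" "v - h = dK y r" using M unfolding Mid_def by blast
  have "\<forall>w. length w < m \<longrightarrow> dK y r w = 0"
    using v h r(2)[symmetric] by (auto simp: Xt_def IF_def)
  then obtain r' where r': "r' \<in> Rge m" "dK y r' = dK y r" using lift_lemma[OF surj r(1)] by blast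
  have "v = pi0 m (v - h)" using v h by (auto simp: Xt_def IF_def pi0_def fun_eq_iff)
  also have "\<dots> = dA y m (pi1 m r')" using dK_pi[OF y2 r'(1)] r'(2) r(2) by simp
  finally show ?thesis unfolding JA_def using pi1_Rdeg[OF Rge_Rhat[OF r'(1)]] by blast
qed

lemma qK_eq: assumes "f \<in> Fhat" "g \<in> Fhat" "f - g \<in> Mid y" shows "qK y f = qK y g"
proof -
  have "x - f \<in> Mid y \<longleftrightarrow> x - g \<in> Mid y" for x
  proof
    assume "x - f \<in> Mid y" then have "(x - f) + (f - g) \<in> Mid y" using Mid_add[OF y2] assms(3) by blast
    then show "x - g \<in> Mid y" by simp
  next
    assume "x - g \<in> Mid y" then have "(x - g) - (f - g) \<in> Mid y" using Mid_diff[OF y2] assms(3) by blast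
    then show "x - f \<in> Mid y" by simp
  qed
  then show ?thesis by (auto simp: qK_def)
qed

lemma qK_self: "f \<in> Fhat \<Longrightarrow> f \<in> qK y f" by (simp add: qK_def Mid_zero[OF y2])

lemma qK_Fhat: assumes "x \<in> qK y g" shows "g \<in> Fhat"
proof -
  have "x \<in> Fhat" "x - g \<in> Mid y" using assms by (auto simp: qK_def)
  then have "x - (x - g) \<in> Fhat" using Mid_Fhat[OF y2] Fhat_diff by blast
  then show ?thesis by simp
qed

lemma qK_eqD: assumes "f \<in> Fhat" "qK y f = qK y g" shows "f - g \<in> Mid y"
  using qK_self[OF assms(1)] assms(2) unfolding qK_def fsub_eq by blast

lemma grclass_char: assumes f: "f \<in> Fhat"
  shows "grclass y m (qK y f) = {qK y g | g. g \<in> IF m \<and> (\<exists>h\<in>IF (Suc m). g - f - h \<in> Mid y)}"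
proof (intro set_eqI iffI)
  fix k assume "k \<in> grclass y m (qK y f)"
  then obtain g0 g f' where g0: "g0 \<in> IF m" "k = qK y g0" and kg: "k = qK y g" and ff: "qK y f = qK y f'"
    and hh: "qK y (g - f') \<in> IK y (Suc m)"
    unfolding grclass_def IK_def by auto
  obtain h where h: "h \<in> IF (Suc m)" "qK y (g - f') = qK y h" using hh unfolding IK_def by auto
  have g0F: "g0 \<in> Fhat" using g0 IF_Fhat by blast
  have gF: "g \<in> Fhat" using qK_self[OF g0F] g0(2) kg qK_Fhat by metis
  have f'F: "f' \<in> Fhat" using qK_self[OF f] ff qK_Fhat by metis
  have hF: "h \<in> Fhat" using h IF_Fhat by blast
  have 1: "g0 - g \<in> Mid y" using qK_eqD[OF g0F] g0(2) kg by metis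
  have 2: "f - f' \<in> Mid y" using qK_eqD[OF f ff] .
  have 3: "(g - f') - h \<in> Mid y" using qK_eqD[OF Fhat_diff[OF gF f'F] h(2)] .
  have "(g0 - g) + ((g - f') - h) - (f - f') \<in> Mid y"
    using Mid_add[OF y2 1 3] Mid_diff[OF y2 _ 2] by blast
  then have "g0 - f - h \<in> Mid y" by (simp add: algebra_simps)
  then show "k \<in> {qK y g | g. g \<in> IF m \<and> (\<exists>h\<in>IF (Suc m). g - f - h \<in> Mid y)}"
    using g0 h(1) by blast
next
  fix k assume "k \<in> {qK y g | g. g \<in> IF m \<and> (\<exists>h\<in>IF (Suc m). g - f - h \<in> Mid y)}"
  then obtain g h where g: "g \<in> IF m" "k = qK y g" and h: "h \<in> IF (Suc m)" "g - f - h \<in> Mid y" by blast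
  have gF: "g \<in> Fhat" using g IF_Fhat by blast
  have "qK y (g - f) = qK y h"
    using qK_eq[OF Fhat_diff[OF gF f] IF_Fhat[OF h(1)] h(2)] .
  then have "qK y (g - f) \<in> IK y (Suc m)" using h(1) unfolding IK_def by blast
  moreover have "k \<in> IK y m" using g unfolding IK_def by blast
  ultimately show "k \<in> grclass y m (qK y f)" unfolding grclass_def using g(2) by auto
qed

lemma grclass_cong: assumes f1: "f1 \<in> Fhat" and f2: "f2 \<in> Fhat" and h0: "h0 \<in> IF (Suc m)"
  and M: "f1 - f2 - h0 \<in> Mid y"
  shows "grclass y m (qK y f1) = grclass y m (qK y f2)"
proof -
  have "(\<exists>h\<in>IF (Suc m). g - f1 - h \<in> Mid y) \<longleftrightarrow> (\<exists>h\<in>IF (Suc m). g - f2 - h \<in> Mid y)" for g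
  proof
    assume "\<exists>h\<in>IF (Suc m). g - f1 - h \<in> Mid y"
    then obtain h where h: "h \<in> IF (Suc m)" "g - f1 - h \<in> Mid y" by blast
    have "(g - f1 - h) + (f1 - f2 - h0) \<in> Mid y" using Mid_add[OF y2 h(2) M] .
    then have "g - f2 - (h + h0) \<in> Mid y" by (simp add: algebra_simps)
    then show "\<exists>h\<in>IF (Suc m). g - f2 - h \<in> Mid y" using IF_add[OF h(1) h0] by blast
  next
    assume "\<exists>h\<in>IF (Suc m). g - f2 - h \<in> Mid y"
    then obtain h where h: "h \<in> IF (Suc m)" "g - f2 - h \<in> Mid y" by blast
    have "(g - f2 - h) - (f1 - f2 - h0) \<in> Mid y" using Mid_diff[OF y2 h(2) M] .
    then have "g - f1 - (h - h0) \<in> Mid y" by (simp add: algebra_simps)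
    then show "\<exists>h\<in>IF (Suc m). g - f1 - h \<in> Mid y" using IF_diff[OF h(1) h0] by blast
  qed
  then show ?thesis unfolding grclass_char[OF f1] grclass_char[OF f2] by simp
qed

definition acls :: "nat \<Rightarrow> 'x ser \<Rightarrow> 'x ser set" where
  "acls m v = {v' \<in> Xt m. v' - v \<in> JA y m}"

lemma Aquot_eq: "Aquot y m = acls m ` Xt m"
  by (simp add: Aquot_def acls_def)

lemma acls_self: "v \<in> Xt m \<Longrightarrow> v \<in> acls m v" by (simp add: acls_def JA_zero[OF y2])

lemma acls_eq: assumes "v1 \<in> Xt m" "v2 \<in> Xt m" "v1 - v2 \<in> JA y m" shows "acls m v1 = acls m v2"
proof -
  have "x - v1 \<in> JA y m \<longleftrightarrow> x - v2 \<in> JA y m" for x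
  proof
    assume "x - v1 \<in> JA y m"
    then have "(x - v1) - (0 - (v1 - v2)) \<in> JA y m" using JA_diff[OF y2] JA_zero[OF y2] assms(3) by metis
    then show "x - v2 \<in> JA y m" by simp
  next
    assume "x - v2 \<in> JA y m" then have "(x - v2) - (v1 - v2) \<in> JA y m" using JA_diff[OF y2] assms(3) by blast
    then show "x - v1 \<in> JA y m" by simp
  qed
  then show ?thesis by (auto simp: acls_def)
qed

lemma natmap_rep: assumes a: "a \<in> Aquot y m"
  obtains v where "v \<in> Xt m" "a = acls m v" "natmap y m a = grclass y m (qK y v)"
proof -
  obtain v0 where v0: "v0 \<in> Xt m" "a = acls m v0" using a unfolding Aquot_eq by blast
  let ?v = "SOME v. v \<in> a"
  have "?v \<in> a" using acls_self[OF v0(1)] v0(2) by (metis someI)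
  then have v: "?v \<in> Xt m" "?v - v0 \<in> JA y m" using v0(2) by (auto simp: acls_def)
  then have "a = acls m ?v" using acls_eq v0 by metis
  moreover have "natmap y m a = grclass y m (qK y ?v)" by (simp add: natmap_def)
  ultimately show ?thesis using that v(1) by blast
qed

lemma quadratic_of_surj: assumes surj: "\<forall>p\<ge>2. syz_surj y p" shows "quadratic y"
  unfolding quadratic_def
proof (intro allI)
  fix m
  have surjm: "\<forall>k. 2 \<le> k \<and> k < m \<longrightarrow> syz_surj y k" using surj by auto
  show "bij_betw (natmap y m) (Aquot y m) (grK y m)"
    unfolding bij_betw_def
  proof
    show "inj_on (natmap y m) (Aquot y m)"
    proof (rule inj_onI)
      fix a1 a2 assume a1: "a1 \<in> Aquot y m" and a2: "a2 \<in> Aquot y m" and eq: "natmap y m a1 = natmap y m a2"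
      obtain v1 where v1: "v1 \<in> Xt m" "a1 = acls m v1" "natmap y m a1 = grclass y m (qK y v1)"
        using natmap_rep[OF a1] by blast
      obtain v2 where v2: "v2 \<in> Xt m" "a2 = acls m v2" "natmap y m a2 = grclass y m (qK y v2)"
        using natmap_rep[OF a2] by blast
      have v1F: "v1 \<in> Fhat" and v2F: "v2 \<in> Fhat" using v1 v2 Xt_Fhat by blast+
      have "\<exists>g. qK y v1 = qK y g \<and> g \<in> IF m \<and> (\<exists>h\<in>IF (Suc m). g - v1 - h \<in> Mid y)"
        using Xt_IF[OF v1(1)] IF_zero[of "Suc m"] Mid_zero[OF y2] by (intro exI[of _ v1] conjI refl bexI[of _ 0]) simp_all
      then have "qK y v1 \<in> grclass y m (qK y v1)"
        unfolding grclass_char[OF v1F] by blast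
      then have "qK y v1 \<in> grclass y m (qK y v2)" using eq v1(3) v2(3) by simp
      then obtain g h where g: "g \<in> IF m" "qK y v1 = qK y g" and h: "h \<in> IF (Suc m)" "g - v2 - h \<in> Mid y"
        unfolding grclass_char[OF v2F] by blast
      have "v1 - g \<in> Mid y" using qK_eqD[OF v1F g(2)] .
      from Mid_add[OF y2 this h(2)] have "(v1 - v2) - h \<in> Mid y" by (simp add: algebra_simps)
      then have "v1 - v2 \<in> JA y m" using key_lemma[OF surjm Xt_diff[OF v1(1) v2(1)] h(1)] by blast
      then show "a1 = a2" using v1 v2 acls_eq by metis
    qed
  next
    show "natmap y m ` Aquot y m = grK y m"
    proof (intro set_eqI iffI)
      fix k assume "k \<in> natmap y m ` Aquot y m"
      then obtain a where a: "a \<in> Aquot y m" "k = natmap y m a" by blast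
      obtain v where v: "v \<in> Xt m" "natmap y m a = grclass y m (qK y v)" using natmap_rep[OF a(1)] by blast
      have "qK y v \<in> IK y m" using Xt_IF[OF v(1)] unfolding IK_def by blast
      then show "k \<in> grK y m" unfolding grK_def using a(2) v(2) by blast
    next
      fix k assume "k \<in> grK y m"
      then obtain f where f: "f \<in> IF m" "k = grclass y m (qK y f)" unfolding grK_def IK_def by blast
      have fF: "f \<in> Fhat" using f IF_Fhat by blast
      let ?a = "acls m (pi0 m f)"
      have pa: "pi0 m f \<in> Xt m" using pi0_Xt[OF fF] .
      have aA: "?a \<in> Aquot y m" unfolding Aquot_eq using pa by blast
      obtain v where v: "v \<in> Xt m" "?a = acls m v" "natmap y m ?a = grclass y m (qK y v)"
        using natmap_rep[OF aA] by blast
      have "v \<in> ?a" using acls_self[OF v(1)] v(2) by simp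
      then have "v - pi0 m f \<in> JA y m" by (simp add: acls_def)
      then obtain r where r: "r \<in> Rdeg m" "v - pi0 m f = dA y m r" unfolding JA_def by blast
      have rR: "r \<in> Rhat" using r Rdeg_Rhat by blast
      have dKI: "dK y r \<in> IF m" using dK_IF[OF y2 Rdeg_Rge[OF r(1)]] .
      let ?h = "(v - f) - dK y r"
      have "?h = - (dK y r - pi0 m (dK y r)) - (f - pi0 m f)"
        using r(2) by (simp add: dA_def algebra_simps)
      then have hI: "?h \<in> IF (Suc m)"
        using IF_pi0_rest[OF dKI] IF_pi0_rest[OF f(1)] IF_uminus IF_diff by metis
      have "v - f - ?h \<in> Mid y" unfolding Mid_def using rR by simp
      then have "grclass y m (qK y v) = grclass y m (qK y f)"
        using grclass_cong[OF Xt_Fhat[OF v(1)] fF hI] by blast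
      then show "k \<in> natmap y m ` Aquot y m" using aA v(3) f(2) by (metis image_eqI)
    qed
  qed
qed

end


lemma lmul_Rge: assumes a: "a \<in> IF j" and r: "r \<in> Rge k" shows "lmul a r \<in> Rge (j+k)"
proof -
  have "lmul a r \<in> Rhat" using Rhat_lmul[OF IF_Fhat[OF a] Rge_Rhat[OF r]] .
  moreover have "lmul a r b = 0" if "rdeg b < j + k" for b
  proof -
    obtain u q v where b: "b = (u,q,v)" by (cases b)
    have "a a' * r (b',q,v) = 0" if "(a',b') \<in> S2 u" for a' b'
    proof (cases "length a' < j")
      case True then show ?thesis using a by (simp add: IF_def)
    next
      case False
      then have "rdeg (b',q,v) < k" using that \<open>rdeg b < j + k\<close> by (auto simp: b S2_def rdeg_def)
      then show ?thesis using r by (simp add: Rge_def)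
    qed
    then show ?thesis by (simp add: b lmul_apply split_def) (rule sum.neutral, auto)
  qed
  ultimately show ?thesis by (simp add: Rge_def)
qed

lemma rmul_Rge: assumes g: "g \<in> IF j" and r: "r \<in> Rge k" shows "rmul r g \<in> Rge (k+j)"
proof -
  have "rmul r g \<in> Rhat" using Rhat_rmul[OF IF_Fhat[OF g] Rge_Rhat[OF r]] .
  moreover have "rmul r g b = 0" if "rdeg b < k + j" for b
  proof -
    obtain u q v where b: "b = (u,q,v)" by (cases b)
    have "r (u,q,c) * g d = 0" if "(c,d) \<in> S2 v" for c d
    proof (cases "length d < j")
      case True then show ?thesis using g by (simp add: IF_def)
    next
      case False
      then have "rdeg (u,q,c) < k" using that \<open>rdeg b < k + j\<close> by (auto simp: b S2_def rdeg_def)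
      then show ?thesis using r by (simp add: Rge_def)
    qed
    then show ?thesis by (simp add: b rmul_apply split_def) (rule sum.neutral, auto)
  qed
  ultimately show ?thesis by (simp add: Rge_def)
qed

lemma pi1_lmul: fixes r :: "('x,'q) rser" assumes a: "a \<in> IF j" and r: "r \<in> Rge k"
  shows "pi1 (j+k) (lmul a r) = lmul (pi0 j a) (pi1 k r)"
proof
  fix b :: "'x list \<times> 'q \<times> 'x list"
  obtain u q v where b: "b = (u,q,v)" by (cases b)
  show "pi1 (j+k) (lmul a r) b = lmul (pi0 j a) (pi1 k r) b"
  proof (cases "rdeg b = j + k")
    case True
    have "a a' * r (b',q,v) = pi0 j a a' * pi1 k r (b',q,v)" if "(a',b') \<in> S2 u" for a' b'
    proof (cases "length a' = j")
      case True
      then have "rdeg (b',q,v) = k" using that \<open>rdeg b = j + k\<close> by (auto simp: b S2_def rdeg_def)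
      then show ?thesis using True by (simp add: pi0_def pi1_def)
    next
      case False
      show ?thesis
      proof (cases "length a' < j")
        case True then show ?thesis using a by (simp add: IF_def pi0_def)
      next
        case False': False
        then have "rdeg (b',q,v) < k" using that \<open>rdeg b = j + k\<close> False by (auto simp: b S2_def rdeg_def)
        then show ?thesis using r False by (simp add: Rge_def pi0_def)
      qed
    qed
    then show ?thesis using True by (simp add: b lmul_apply pi1_def split_def)
  next
    case False
    have "pi0 j a a' * pi1 k r (b',q,v) = 0" if "(a',b') \<in> S2 u" for a' b'
      using that False by (auto simp: b S2_def rdeg_def pi0_def pi1_def)
    then show ?thesis using False by (simp add: b lmul_apply pi1_def split_def) (rule sum.neutral, force)
  qed
qed

lemma pi1_rmul: fixes r :: "('x,'q) rser" assumes g: "g \<in> IF j" and r: "r \<in> Rge k"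
  shows "pi1 (k+j) (rmul r g) = rmul (pi1 k r) (pi0 j g)"
proof
  fix b :: "'x list \<times> 'q \<times> 'x list"
  obtain u q v where b: "b = (u,q,v)" by (cases b)
  show "pi1 (k+j) (rmul r g) b = rmul (pi1 k r) (pi0 j g) b"
  proof (cases "rdeg b = k + j")
    case True
    have "r (u,q,c) * g d = pi1 k r (u,q,c) * pi0 j g d" if "(c,d) \<in> S2 v" for c d
    proof (cases "length d = j")
      case True
      then have "rdeg (u,q,c) = k" using that \<open>rdeg b = k + j\<close> by (auto simp: b S2_def rdeg_def)
      then show ?thesis using True by (simp add: pi0_def pi1_def)
    next
      case False
      show ?thesis
      proof (cases "length d < j")
        case True then show ?thesis using g by (simp add: IF_def pi0_def)
      next
        case False': False
        then have "rdeg (u,q,c) < k" using that \<open>rdeg b = k + j\<close> False by (auto simp: b S2_def rdeg_def)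
        then show ?thesis using r False by (simp add: Rge_def pi0_def)
      qed
    qed
    then show ?thesis using True by (simp add: b rmul_apply pi1_def split_def)
  next
    case False
    have "pi1 k r (u,q,c) * pi0 j g d = 0" if "(c,d) \<in> S2 v" for c d
      using that False by (auto simp: b S2_def rdeg_def pi0_def pi1_def)
    then show ?thesis using False by (simp add: b rmul_apply pi1_def split_def) (rule sum.neutral, force)
  qed
qed

lemma pi0_fmul: assumes f: "f \<in> IF k" and g: "g \<in> IF j"
  shows "pi0 (k+j) (fmul f g) = fmul (pi0 k f) (pi0 j g)"
proof
  fix w
  show "pi0 (k+j) (fmul f g) w = fmul (pi0 k f) (pi0 j g) w"
  proof (cases "length w = k + j")
    case True
    have "f a * g d = pi0 k f a * pi0 j g d" if "(a,d) \<in> S2 w" for a d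
    proof (cases "length a = k")
      case True
      then have "length d = j" using that \<open>length w = k + j\<close> by (auto simp: S2_def)
      then show ?thesis using True by (simp add: pi0_def)
    next
      case False
      show ?thesis
      proof (cases "length a < k")
        case True then show ?thesis using f by (simp add: IF_def pi0_def)
      next
        case False': False
        then have "length d < j" using that \<open>length w = k + j\<close> False by (auto simp: S2_def)
        then show ?thesis using g False by (simp add: IF_def pi0_def)
      qed
    qed
    then show ?thesis using True by (simp add: fmul_S2 pi0_def split_def)
  next
    case False
    have "pi0 k f a * pi0 j g d = 0" if "(a,d) \<in> S2 w" for a d
      using that False by (auto simp: S2_def pi0_def)
    then show ?thesis using False by (simp add: fmul_S2 pi0_def split_def) (rule sum.neutral, force)
  qed
qed


lemma sum_additive: assumes add: "\<And>a b. h (a + b) = h a + h b" and z: "h 0 = 0"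
  shows "h (sum F I) = (\<Sum>i\<in>I. h (F i))"
proof (induction I rule: infinite_finite_induct)
  case (insert i I)
  have "sum F (insert i I) = F i + sum F I" using insert(1,2) by (rule sum.insert)
  moreover have "(\<Sum>i\<in>insert i I. h (F i)) = h (F i) + (\<Sum>i\<in>I. h (F i))" using insert(1,2) by (rule sum.insert)
  ultimately show ?case using insert(3) add by metis
qed (simp_all add: z)

lemma sum_single: assumes "finite A" "pz \<in> A" "\<And>p. p \<in> A \<Longrightarrow> p \<noteq> pz \<Longrightarrow> g p = 0"
  shows "sum g A = g pz"
proof -
  have "sum g A = g pz + sum g (A - {pz})" using assms(1,2) by (rule sum.remove)
  moreover have "sum g (A - {pz}) = 0" using assms(3) by (intro sum.neutral) auto
  ultimately show ?thesis by simp
qed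


lemma fmul_zero_right[simp]: "fmul f 0 = 0" by (simp add: fmul_def fun_eq_iff)
lemma fmul_zero_left[simp]: "fmul 0 g = 0" by (simp add: fmul_def fun_eq_iff)
lemma fmul_add_left: "fmul (f1 + f2) g = fmul f1 g + fmul f2 g"
  by (simp add: fmul_def fun_eq_iff distrib_right sum.distrib)
lemma fmul_add_right: "fmul f (g1 + g2) = fmul f g1 + fmul f g2"
  by (simp add: fmul_def fun_eq_iff distrib_left sum.distrib)
lemma fmul_smult_left: "fmul (\<lambda>w. c * f w) g = (\<lambda>w. c * fmul f g w)"
  by (simp add: fmul_def fun_eq_iff sum_distrib_left mult.assoc)
lemma fmul_smult_right: "fmul f (\<lambda>w. c * g w) = (\<lambda>w. c * fmul f g w)"
  by (simp add: fmul_def fun_eq_iff sum_distrib_left mult.left_commute)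
lemma fmul_uminus_left: "fmul (- f) g = - fmul f g"
  by (simp add: fmul_def fun_eq_iff sum_negf)
lemma fmul_diff_left: "fmul (f1 - f2) g = fmul f1 g - fmul f2 g"
  using fmul_add_left[of f1 "- f2" g] fmul_uminus_left[of f2 g] by simp
lemma fmul_uminus_right: "fmul f (- g) = - fmul f g"
  by (simp add: fmul_def fun_eq_iff sum_negf)
lemma fmul_diff_right: "fmul f (g1 - g2) = fmul f g1 - fmul f g2"
  using fmul_add_right[of f g1 "- g2"] fmul_uminus_right[of f g2] by simp
lemma fmul_sum_left: "fmul (sum F I) g = (\<Sum>i\<in>I. fmul (F i) g)"
  by (rule sum_additive[where h="\<lambda>f. fmul f g"]) (simp_all add: fmul_add_left)

definition delta :: "'x list \<Rightarrow> 'x ser" where "delta w0 = (\<lambda>w. if w = w0 then 1 else 0)"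

lemma delta_Xt: "delta w0 \<in> Xt (length w0)"
proof -
  have "delta w0 \<in> Fhat" unfolding Fhat_def
  proof (intro CollectI allI)
    fix n show "finite {w. length w = n \<and> delta w0 w \<noteq> 0}"
      by (rule finite_subset[of _ "{w0}"]) (auto simp: delta_def)
  qed
  then show ?thesis by (auto simp: Xt_def delta_def)
qed

lemma fmul_delta_nil_left[simp]: "fmul (delta []) f = f"
proof
  fix w
  have "(\<Sum>p\<in>S2 w. delta [] (fst p) * f (snd p)) = delta [] (fst (take 0 w,w)) * f (snd (take 0 w,w))"
    by (rule sum_single[where pz="(take 0 w,w)"]) (simp, auto simp: S2_def delta_def)
  then show "fmul (delta []) f w = f w" by (simp add: fmul_S2 split_def delta_def)
qed

lemma fmul_delta_nil_right[simp]: "fmul f (delta []) = f"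
proof
  fix w
  have "(\<Sum>p\<in>S2 w. f (fst p) * delta [] (snd p)) = f (fst (w,take 0 w)) * delta [] (snd (w,take 0 w))"
    by (rule sum_single[where pz="(w,take 0 w)"]) (simp, auto simp: S2_def delta_def)
  then show "fmul f (delta []) w = f w" by (simp add: fmul_S2 split_def delta_def)
qed

lemma fmul_delta_right_snoc: "fmul f (delta [x]) (w @ [x']) = (if x = x' then f w else 0)"
proof -
  have "(\<Sum>p\<in>S2 (w @ [x']). f (fst p) * delta [x] (snd p)) = f (fst (w,[x'])) * delta [x] (snd (w,[x']))"
  proof (rule sum_single[where pz="(w,[x'])"])
    fix p assume p: "p \<in> S2 (w @ [x'])" "p \<noteq> (w,[x'])"
    obtain a b where ab: "p = (a,b)" by (cases p)
    show "f (fst p) * delta [x] (snd p) = 0"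
    proof (cases "b = [x]")
      case True
      then have "a = w" "x = x'" using p ab by (auto simp: S2_def)
      then show ?thesis using p ab True by auto
    qed (simp add: ab delta_def)
  qed (simp, simp add: S2_def)
  then show ?thesis by (simp add: fmul_S2 split_def delta_def)
qed

lemma fmul_delta_right_nil: "fmul f (delta [x]) [] = 0"
  by (simp add: fmul_def delta_def)

lemma fmul_delta_left_cons: "fmul (delta [x]) f (x' # w) = (if x = x' then f w else 0)"
proof -
  have "(\<Sum>p\<in>S2 (x' # w). delta [x] (fst p) * f (snd p)) = delta [x] (fst ([x'],w)) * f (snd ([x'],w))"
  proof (rule sum_single[where pz="([x'],w)"])
    fix p assume p: "p \<in> S2 (x' # w)" "p \<noteq> ([x'],w)"
    obtain a b where ab: "p = (a,b)" by (cases p)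
    show "delta [x] (fst p) * f (snd p) = 0"
    proof (cases "a = [x]")
      case True
      then have "b = w" "x = x'" using p ab by (auto simp: S2_def)
      then show ?thesis using p ab True by auto
    qed (simp add: ab delta_def)
  qed (simp, simp add: S2_def)
  then show ?thesis by (simp add: fmul_S2 split_def delta_def)
qed

lemma lmul_add: "lmul a (r1 + r2) = lmul a r1 + lmul a r2"
  by (simp add: lmul_def fun_eq_iff distrib_left sum.distrib split_def)
lemma lmul_smult: "lmul a (\<lambda>b. c * r b) = (\<lambda>b. c * lmul a r b)"
  by (simp add: lmul_def fun_eq_iff sum_distrib_left mult.left_commute split_def)
lemma lmul_zero[simp]: "lmul a 0 = 0" by (simp add: lmul_def fun_eq_iff split_def)
lemma lmul_uminus: "lmul a (- r) = - lmul a r"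
  by (simp add: lmul_def fun_eq_iff sum_negf split_def)
lemma lmul_diff: "lmul a (r1 - r2) = lmul a r1 - lmul a r2"
  using lmul_add[of a r1 "- r2"] lmul_uminus[of a r2] by simp
lemma rmul_add: "rmul (r1 + r2) g = rmul r1 g + rmul r2 g"
  by (simp add: rmul_def fun_eq_iff distrib_right sum.distrib split_def)
lemma rmul_smult: "rmul (\<lambda>b. c * r b) g = (\<lambda>b. c * rmul r g b)"
  by (simp add: rmul_def fun_eq_iff sum_distrib_left mult.assoc split_def)
lemma rmul_zero[simp]: "rmul 0 g = 0" by (simp add: rmul_def fun_eq_iff split_def)
lemma rmul_uminus: "rmul (- r) g = - rmul r g"
  by (simp add: rmul_def fun_eq_iff sum_negf split_def)
lemma rmul_diff: "rmul (r1 - r2) g = rmul r1 g - rmul r2 g"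
  using rmul_add[of r1 "- r2" g] rmul_uminus[of r2 g] by simp
lemma rmul_sum: "rmul (sum F I) g = (\<Sum>i\<in>I. rmul (F i) g)"
  by (rule sum_additive[where h="\<lambda>r. rmul r g"]) (simp_all add: rmul_add)
lemma lmul_sum: "lmul a (sum F I) = (\<Sum>i\<in>I. lmul a (F i))"
  by (rule sum_additive[where h="\<lambda>r. lmul a r"]) (simp_all add: lmul_add)

lemma pi1_add: "pi1 p (r1 + r2) = pi1 p r1 + pi1 p r2" by (auto simp: pi1_def fun_eq_iff)
lemma pi1_smult: "pi1 p (\<lambda>b. c * r b) = (\<lambda>b. c * pi1 p r b)" by (auto simp: pi1_def fun_eq_iff)
lemma pi1_diff: "pi1 p (r1 - r2) = pi1 p r1 - pi1 p r2" by (auto simp: pi1_def fun_eq_iff)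
lemma Rge_smult: "r \<in> Rge p \<Longrightarrow> (\<lambda>b. c * r b) \<in> Rge p" by (auto simp: Rge_def Rhat_smult)
lemma Rdeg_smult: "r \<in> Rdeg p \<Longrightarrow> (\<lambda>b. c * r b) \<in> Rdeg p" by (auto simp: Rdeg_def Rhat_smult)
lemma Rdeg_sum: "(\<And>i. i \<in> I \<Longrightarrow> F i \<in> Rdeg p) \<Longrightarrow> sum F I \<in> Rdeg p"
proof (induction I rule: infinite_finite_induct)
  case (insert i I)
  have "sum F (insert i I) = F i + sum F I" using insert(1,2) by (rule sum.insert)
  then show ?case using insert Rdeg_add by (metis insertCI)
qed simp_all


section \<open>Liftable syzygies\<close>

context
  fixes y :: "'q \<Rightarrow> 'x ser"
  assumes y2: "\<forall>q. y q \<in> IF 2"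
begin

definition Lset :: "nat \<Rightarrow> ('x,'q) rser set" where
  "Lset p = pi1 p ` kerK y p"

lemma dA_add: "r1 \<in> Rhat \<Longrightarrow> r2 \<in> Rhat \<Longrightarrow> dA y p (r1 + r2) = dA y p r1 + dA y p r2"
  by (simp add: dA_def dK_add pi0_add)
lemma dA_smult: "r \<in> Rhat \<Longrightarrow> dA y p (\<lambda>b. c * r b) = (\<lambda>w. c * dA y p r w)"
  by (simp add: dA_def dK_smult pi0_def fun_eq_iff)
lemma dA_diff': "r1 \<in> Rhat \<Longrightarrow> r2 \<in> Rhat \<Longrightarrow> dA y p (r1 - r2) = dA y p r1 - dA y p r2"
  by (simp add: dA_def dK_diff pi0_diff)
lemma dA_zero[simp]: "dA y p 0 = 0" by (simp add: dA_def pi0_def fun_eq_iff)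
lemma dA_sum: "(\<And>i. i \<in> I \<Longrightarrow> F i \<in> Rhat) \<Longrightarrow> dA y p (sum F I) = (\<Sum>i\<in>I. dA y p (F i))"
proof (induction I rule: infinite_finite_induct)
  case (insert i I)
  have e1: "sum F (insert i I) = F i + sum F I" using insert(1,2) by (rule sum.insert)
  have e2: "(\<Sum>i\<in>insert i I. dA y p (F i)) = dA y p (F i) + (\<Sum>i\<in>I. dA y p (F i))" using insert(1,2) by (rule sum.insert)
  have "dA y p (F i + sum F I) = dA y p (F i) + dA y p (sum F I)" using insert by (intro dA_add Rhat_sum) auto
  moreover have ih: "dA y p (sum F I) = (\<Sum>i\<in>I. dA y p (F i))" using insert by blast
  ultimately show ?case unfolding e1 e2 by metis
qed auto

lemma kerK_zero[simp]: "0 \<in> kerK y p" by (simp add: kerK_def)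

lemma Lset_zero[simp]: "0 \<in> Lset p"
proof -
  have "pi1 p 0 = 0" by (simp add: pi1_def fun_eq_iff)
  then show ?thesis unfolding Lset_def using kerK_zero by (metis image_eqI)
qed

lemma Lset_add: assumes "s1 \<in> Lset p" "s2 \<in> Lset p" shows "s1 + s2 \<in> Lset p"
proof -
  obtain r1 r2 where r: "r1 \<in> kerK y p" "s1 = pi1 p r1" "r2 \<in> kerK y p" "s2 = pi1 p r2"
    using assms unfolding Lset_def by blast
  have g: "r1 \<in> Rge p" "r2 \<in> Rge p" "dK y r1 = 0" "dK y r2 = 0" using r(1,3) by (auto simp: kerK_def)
  have "dK y (r1 + r2) = 0" using dK_add[OF Rge_Rhat[OF g(1)] Rge_Rhat[OF g(2)]] g(3,4) by simp
  then have "r1 + r2 \<in> kerK y p" using Rge_add[OF g(1,2)] by (simp add: kerK_def)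
  moreover have "s1 + s2 = pi1 p (r1 + r2)" using r by (simp add: pi1_add)
  ultimately show ?thesis unfolding Lset_def by blast
qed

lemma Lset_smult: assumes "s \<in> Lset p" shows "(\<lambda>b. c * s b) \<in> Lset p"
proof -
  obtain r where r: "r \<in> kerK y p" "s = pi1 p r" using assms unfolding Lset_def by blast
  have g: "r \<in> Rge p" "dK y r = 0" using r(1) by (auto simp: kerK_def)
  have "dK y (\<lambda>b. c * r b) = 0" using dK_smult[OF Rge_Rhat[OF g(1)]] g(2) by (simp add: fun_eq_iff)
  then have "(\<lambda>b. c * r b) \<in> kerK y p" using Rge_smult[OF g(1)] by (simp add: kerK_def)
  moreover have "(\<lambda>b. c * s b) = pi1 p (\<lambda>b. c * r b)" using r by (simp add: pi1_smult)
  ultimately show ?thesis unfolding Lset_def by blast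
qed

lemma Lset_uminus: assumes "s \<in> Lset p" shows "- s \<in> Lset p"
proof -
  have "- s = (\<lambda>b. (-1) * s b)" by auto
  then show ?thesis using Lset_smult[OF assms, of "-1"] by simp
qed

lemma Lset_diff: assumes "s1 \<in> Lset p" "s2 \<in> Lset p" shows "s1 - s2 \<in> Lset p"
  using Lset_add[OF assms(1) Lset_uminus[OF assms(2)]] by simp

lemma Lset_sum: "(\<And>i. i \<in> I \<Longrightarrow> F i \<in> Lset p) \<Longrightarrow> sum F I \<in> Lset p"
proof (induction I rule: infinite_finite_induct)
  case (insert i I)
  have "sum F (insert i I) = F i + sum F I" using insert(1,2) by (rule sum.insert)
  then show ?case using insert Lset_add by (metis insertCI)
qed simp_all

lemma Lset_kerA: assumes "s \<in> Lset p" shows "s \<in> kerA y p"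
proof -
  obtain r where r: "r \<in> kerK y p" "s = pi1 p r" using assms unfolding Lset_def by blast
  have rg: "r \<in> Rge p" and r0: "dK y r = 0" using r by (auto simp: kerK_def)
  have "dA y p s = pi0 p (dK y r)" using dK_pi[OF y2 rg] r(2) by simp
  also have "\<dots> = 0" using r0 by (simp add: pi0_def fun_eq_iff)
  finally show ?thesis using pi1_Rdeg[OF Rge_Rhat[OF rg]] r(2) by (simp add: kerA_def)
qed

lemma lmul_Rdeg: assumes a: "a \<in> Xt j" and r: "r \<in> Rdeg k" shows "lmul a r \<in> Rdeg (j+k)"
proof -
  have "pi1 (j+k) (lmul a r) = lmul a r"
    using pi1_lmul[OF Xt_IF[OF a] Rdeg_Rge[OF r]] Xt_pi0[OF a] Rdeg_pi1[OF r] by simp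
  moreover have "pi1 (j+k) (lmul a r) \<in> Rdeg (j+k)"
    using pi1_Rdeg Rge_Rhat lmul_Rge[OF Xt_IF[OF a] Rdeg_Rge[OF r]] by blast
  ultimately show ?thesis by simp
qed

lemma rmul_Rdeg: assumes g: "g \<in> Xt j" and r: "r \<in> Rdeg k" shows "rmul r g \<in> Rdeg (k+j)"
proof -
  have "pi1 (k+j) (rmul r g) = rmul r g"
    using pi1_rmul[OF Xt_IF[OF g] Rdeg_Rge[OF r]] Xt_pi0[OF g] Rdeg_pi1[OF r] by simp
  moreover have "pi1 (k+j) (rmul r g) \<in> Rdeg (k+j)"
    using pi1_Rdeg Rge_Rhat rmul_Rge[OF Xt_IF[OF g] Rdeg_Rge[OF r]] by blast
  ultimately show ?thesis by simp
qed

lemma dA_lmul: assumes a: "a \<in> Xt j" and r: "r \<in> Rdeg k" shows "dA y (j+k) (lmul a r) = fmul a (dA y k r)"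
proof -
  have "dA y (j+k) (lmul a r) = pi0 (j+k) (fmul a (dK y r))"
    by (simp add: dA_def dK_lmul[OF Xt_Fhat[OF a] Rdeg_Rhat[OF r]])
  also have "\<dots> = fmul (pi0 j a) (pi0 k (dK y r))"
    by (rule pi0_fmul[OF Xt_IF[OF a] dK_IF[OF y2 Rdeg_Rge[OF r]]])
  finally show ?thesis using Xt_pi0[OF a] by (simp add: dA_def)
qed

lemma dA_rmul: assumes g: "g \<in> Xt j" and r: "r \<in> Rdeg k" shows "dA y (k+j) (rmul r g) = fmul (dA y k r) g"
proof -
  have "dA y (k+j) (rmul r g) = pi0 (k+j) (fmul (dK y r) g)"
    by (simp add: dA_def dK_rmul[OF Xt_Fhat[OF g] Rdeg_Rhat[OF r]])
  also have "\<dots> = fmul (pi0 k (dK y r)) (pi0 j g)"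
    by (rule pi0_fmul[OF dK_IF[OF y2 Rdeg_Rge[OF r]] Xt_IF[OF g]])
  finally show ?thesis using Xt_pi0[OF g] by (simp add: dA_def)
qed

lemma Lset_lmul: assumes a: "a \<in> Xt j" and s: "s \<in> Lset k" shows "lmul a s \<in> Lset (j+k)"
proof -
  obtain r where r: "r \<in> kerK y k" "s = pi1 k r" using s unfolding Lset_def by blast
  have rg: "r \<in> Rge k" and r0: "dK y r = 0" using r by (auto simp: kerK_def)
  have "lmul a r \<in> kerK y (j+k)"
    using lmul_Rge[OF Xt_IF[OF a] rg] dK_lmul[OF Xt_Fhat[OF a] Rge_Rhat[OF rg]] r0 by (simp add: kerK_def)
  moreover have "pi1 (j+k) (lmul a r) = lmul a s"
    using pi1_lmul[OF Xt_IF[OF a] rg] Xt_pi0[OF a] r(2) by simp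
  ultimately show ?thesis unfolding Lset_def by (metis image_eqI)
qed

lemma Lset_rmul: assumes g: "g \<in> Xt j" and s: "s \<in> Lset k" shows "rmul s g \<in> Lset (k+j)"
proof -
  obtain r where r: "r \<in> kerK y k" "s = pi1 k r" using s unfolding Lset_def by blast
  have rg: "r \<in> Rge k" and r0: "dK y r = 0" using r by (auto simp: kerK_def)
  have "rmul r g \<in> kerK y (k+j)"
    using rmul_Rge[OF Xt_IF[OF g] rg] dK_rmul[OF Xt_Fhat[OF g] Rge_Rhat[OF rg]] r0 by (simp add: kerK_def)
  moreover have "pi1 (k+j) (rmul r g) = rmul s g"
    using pi1_rmul[OF Xt_IF[OF g] rg] Xt_pi0[OF g] r(2) by simp
  ultimately show ?thesis unfolding Lset_def by (metis image_eqI)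
qed

lemma Lset_triv: assumes r': "r' \<in> Rdeg k" and rho: "\<rho> \<in> Rdeg 2"
  shows "rmul r' (dA y 2 \<rho>) - lmul (dA y k r') \<rho> \<in> Lset (k+2)"
proof -
  have r'g: "r' \<in> Rge k" and rhog: "\<rho> \<in> Rge 2" using r' rho Rdeg_Rge by blast+
  have r'h: "r' \<in> Rhat" and rhoh: "\<rho> \<in> Rhat" using r' rho Rdeg_Rhat by blast+
  have I1: "dK y \<rho> \<in> IF 2" and I2: "dK y r' \<in> IF k" using dK_IF[OF y2] r'g rhog by blast+
  let ?R = "rmul r' (dK y \<rho>) - lmul (dK y r') \<rho>"
  have g1: "rmul r' (dK y \<rho>) \<in> Rge (k+2)" using rmul_Rge[OF I1 r'g] .
  have g2: "lmul (dK y r') \<rho> \<in> Rge (k+2)" using lmul_Rge[OF I2 rhog] .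
  have "?R \<in> Rge (k+2)" using Rge_diff[OF g1 g2] .
  moreover have "dK y ?R = 0"
    using dK_diff[OF Rge_Rhat[OF g1] Rge_Rhat[OF g2]] dK_rmul[OF IF_Fhat[OF I1] r'h] dK_lmul[OF IF_Fhat[OF I2] rhoh]
    by simp
  ultimately have "?R \<in> kerK y (k+2)" by (simp add: kerK_def)
  moreover have "pi1 (k+2) ?R = rmul r' (dA y 2 \<rho>) - lmul (dA y k r') \<rho>"
    using pi1_rmul[OF I1 r'g] pi1_lmul[OF I2 rhog] Rdeg_pi1[OF r'] Rdeg_pi1[OF rho]
    by (simp add: pi1_diff dA_def)
  ultimately show ?thesis unfolding Lset_def by (metis image_eqI)
qed

end


lemma rmul_delta_snoc: "rmul r (delta [x]) (u,q,v@[x']) = (if x = x' then r (u,q,v) else 0)"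
proof -
  have "(\<Sum>p\<in>S2 (v @ [x']). r (u,q,fst p) * delta [x] (snd p)) = r (u,q,fst (v,[x'])) * delta [x] (snd (v,[x']))"
  proof (rule sum_single[where pz="(v,[x'])"])
    fix p assume p: "p \<in> S2 (v @ [x'])" "p \<noteq> (v,[x'])"
    obtain a b where ab: "p = (a,b)" by (cases p)
    show "r (u,q,fst p) * delta [x] (snd p) = 0"
    proof (cases "b = [x]")
      case True
      then have "a = v" "x = x'" using p ab by (auto simp: S2_def)
      then show ?thesis using p ab True by auto
    qed (simp add: ab delta_def)
  qed (simp, simp add: S2_def)
  then show ?thesis by (simp add: rmul_apply split_def delta_def)
qed

lemma rmul_delta_nil: "rmul r (delta [x]) (u,q,[]) = 0"
  by (simp add: rmul_apply S2_def delta_def)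

lemma lmul_delta_cons: "lmul (delta [x]) r (x'#u,q,v) = (if x = x' then r (u,q,v) else 0)"
proof -
  have "(\<Sum>p\<in>S2 (x' # u). delta [x] (fst p) * r (snd p,q,v)) = delta [x] (fst ([x'],u)) * r (snd ([x'],u),q,v)"
  proof (rule sum_single[where pz="([x'],u)"])
    fix p assume p: "p \<in> S2 (x' # u)" "p \<noteq> ([x'],u)"
    obtain a b where ab: "p = (a,b)" by (cases p)
    show "delta [x] (fst p) * r (snd p,q,v) = 0"
    proof (cases "a = [x]")
      case True
      then have "b = u" "x = x'" using p ab by (auto simp: S2_def)
      then show ?thesis using p ab True by auto
    qed (simp add: ab delta_def)
  qed (simp, simp add: S2_def)
  then show ?thesis by (simp add: lmul_apply split_def delta_def)
qed

lemma lmul_delta_nil: "lmul (delta [x]) r ([],q,v) = 0"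
  by (simp add: lmul_apply S2_def delta_def)

definition rpart :: "('x,'q) rser \<Rightarrow> 'x \<Rightarrow> ('x,'q) rser" where
  "rpart r x = (\<lambda>(u,q,v). r (u,q,v@[x]))"
definition r0part :: "('x,'q) rser \<Rightarrow> ('x,'q) rser" where
  "r0part r = (\<lambda>(u,q,v). if v = [] then r (u,q,v) else 0)"
definition lpart :: "('x,'q) rser \<Rightarrow> 'x \<Rightarrow> ('x,'q) rser" where
  "lpart r x = (\<lambda>(u,q,v). r (x#u,q,v))"
definition l0part :: "('x,'q) rser \<Rightarrow> ('x,'q) rser" where
  "l0part r = (\<lambda>(u,q,v). if u = [] then r (u,q,v) else 0)"

lemma rdecomp: assumes fin: "finite (UNIV :: 'x set)"
  shows "(r :: ('x,'q) rser) = r0part r + (\<Sum>x\<in>UNIV. rmul (rpart r x) (delta [x]))"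
proof
  fix b :: "'x list \<times> 'q \<times> 'x list"
  obtain u q v where b: "b = (u,q,v)" by (cases b)
  show "r b = (r0part r + (\<Sum>x\<in>UNIV. rmul (rpart r x) (delta [x]))) b"
  proof (cases v rule: rev_exhaust)
    case Nil then show ?thesis by (simp add: b r0part_def sum_fun_apply rmul_delta_nil)
  next
    case (snoc v' x')
    have "(\<Sum>x\<in>UNIV. rmul (rpart r x) (delta [x]) (u,q,v'@[x'])) = (\<Sum>x\<in>UNIV. if x = x' then r (u,q,v'@[x']) else 0)"
      by (rule sum.cong) (auto simp: rmul_delta_snoc rpart_def)
    also have "\<dots> = r (u,q,v'@[x'])" using fin by simp
    finally show ?thesis by (simp add: b snoc r0part_def sum_fun_apply)
  qed
qed

lemma ldecomp: assumes fin: "finite (UNIV :: 'x set)"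
  shows "(r :: ('x,'q) rser) = l0part r + (\<Sum>x\<in>UNIV. lmul (delta [x]) (lpart r x))"
proof
  fix b :: "'x list \<times> 'q \<times> 'x list"
  obtain u q v where b: "b = (u,q,v)" by (cases b)
  show "r b = (l0part r + (\<Sum>x\<in>UNIV. lmul (delta [x]) (lpart r x))) b"
  proof (cases u)
    case Nil then show ?thesis by (simp add: b l0part_def sum_fun_apply lmul_delta_nil)
  next
    case (Cons x' u')
    have "(\<Sum>x\<in>UNIV. lmul (delta [x]) (lpart r x) (x'#u',q,v)) = (\<Sum>x\<in>UNIV. if x = x' then r (x'#u',q,v) else 0)"
      by (rule sum.cong) (auto simp: lmul_delta_cons lpart_def)
    also have "\<dots> = r (x'#u',q,v)" using fin by simp
    finally show ?thesis by (simp add: b Cons l0part_def sum_fun_apply)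
  qed
qed

lemma rpart_Rdeg: assumes r: "r \<in> Rdeg (Suc k)" shows "rpart r x \<in> Rdeg k"
proof -
  let ?f = "\<lambda>(u::'a list,q::'b,v). (u,q,v@[x])"
  have inj: "inj ?f" by (auto simp: inj_def)
  have "rpart r x \<in> Rhat" unfolding Rhat_def
  proof (intro CollectI allI)
    fix n
    have "{b. rdeg b = n \<and> rpart r x b \<noteq> 0} \<subseteq> ?f -` {b. rdeg b = Suc n \<and> r b \<noteq> 0}"
      by (auto simp: rpart_def rdeg_def)
    moreover have "finite (?f -` {b. rdeg b = Suc n \<and> r b \<noteq> 0})"
      using r inj by (intro finite_vimageI) (auto simp: Rdeg_def Rhat_def)
    ultimately show "finite {b. rdeg b = n \<and> rpart r x b \<noteq> 0}" by (rule finite_subset)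
  qed
  moreover have "rpart r x b = 0" if "rdeg b \<noteq> k" for b
    using r that by (cases b) (auto simp: rpart_def Rdeg_def rdeg_def)
  ultimately show ?thesis by (simp add: Rdeg_def)
qed

lemma lpart_Rdeg: assumes r: "r \<in> Rdeg (Suc k)" shows "lpart r x \<in> Rdeg k"
proof -
  let ?f = "\<lambda>(u::'a list,q::'b,v). (x#u,q,v)"
  have inj: "inj ?f" by (auto simp: inj_def)
  have "lpart r x \<in> Rhat" unfolding Rhat_def
  proof (intro CollectI allI)
    fix n
    have "{b. rdeg b = n \<and> lpart r x b \<noteq> 0} \<subseteq> ?f -` {b. rdeg b = Suc n \<and> r b \<noteq> 0}"
      by (auto simp: lpart_def rdeg_def)
    moreover have "finite (?f -` {b. rdeg b = Suc n \<and> r b \<noteq> 0})"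
      using r inj by (intro finite_vimageI) (auto simp: Rdeg_def Rhat_def)
    ultimately show "finite {b. rdeg b = n \<and> lpart r x b \<noteq> 0}" by (rule finite_subset)
  qed
  moreover have "lpart r x b = 0" if "rdeg b \<noteq> k" for b
    using r that by (cases b) (auto simp: lpart_def Rdeg_def rdeg_def)
  ultimately show ?thesis by (simp add: Rdeg_def)
qed

lemma r0part_Rdeg: assumes r: "r \<in> Rdeg p" shows "r0part r \<in> Rdeg p"
proof -
  have "r0part r \<in> Rhat" unfolding Rhat_def
  proof (intro CollectI allI)
    fix n
    have "{b. rdeg b = n \<and> r0part r b \<noteq> 0} \<subseteq> {b. rdeg b = n \<and> r b \<noteq> 0}"
      by (auto simp: r0part_def split: if_splits)
    moreover have "finite {b. rdeg b = n \<and> r b \<noteq> 0}" using r by (simp add: Rdeg_def Rhat_def)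
    ultimately show "finite {b. rdeg b = n \<and> r0part r b \<noteq> 0}" by (rule finite_subset)
  qed
  then show ?thesis using r by (auto simp: Rdeg_def r0part_def)
qed


definition vnil :: "('x,'q) rser \<Rightarrow> bool" where "vnil r = (\<forall>u q v. v \<noteq> [] \<longrightarrow> r (u,q,v) = 0)"
definition RV :: "('x,'q) rser \<Rightarrow> bool" where "RV r = (\<forall>u q. r (u,q,[]) = 0)"

lemma Rdeg_small: fixes r :: "('x,'q) rser" assumes "r \<in> Rdeg p" "p < 2" shows "r = 0"
proof
  fix b :: "'x list \<times> 'q \<times> 'x list"
  have "rdeg b \<noteq> p" using assms(2) rdeg_ge2[of b] by linarith
  then show "r b = 0 b" using assms(1) by (cases b) (auto simp: Rdeg_def)
qed

context
  fixes y :: "'q \<Rightarrow> 'x ser"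
  assumes y2: "\<forall>q. y q \<in> IF 2"
begin

lemma sum_delta_eval_cons: fixes F :: "'x \<Rightarrow> 'x ser" assumes fin: "finite (UNIV :: 'x set)"
  shows "(\<Sum>x\<in>UNIV. fmul (delta [x]) (F x)) (x' # w) = F x' w"
proof -
  have "(\<Sum>x\<in>UNIV. fmul (delta [x]) (F x)) (x' # w) = (\<Sum>x\<in>UNIV. fmul (delta [x]) (F x) (x' # w))"
    by (simp add: sum_fun_apply)
  also have "\<dots> = (\<Sum>x\<in>UNIV. if x = x' then F x' w else 0)"
    by (rule sum.cong) (auto simp: fmul_delta_left_cons)
  also have "\<dots> = F x' w" by (subst sum.delta[OF fin]) simp
  finally show ?thesis .
qed

lemma sum_delta_eval_snoc: fixes F :: "'x \<Rightarrow> 'x ser" assumes fin: "finite (UNIV :: 'x set)"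
  shows "(\<Sum>x\<in>UNIV. fmul (F x) (delta [x])) (w @ [x']) = F x' w"
proof -
  have "(\<Sum>x\<in>UNIV. fmul (F x) (delta [x])) (w @ [x']) = (\<Sum>x\<in>UNIV. fmul (F x) (delta [x]) (w @ [x']))"
    by (simp add: sum_fun_apply)
  also have "\<dots> = (\<Sum>x\<in>UNIV. if x = x' then F x' w else 0)"
    by (rule sum.cong) (auto simp: fmul_delta_right_snoc)
  also have "\<dots> = F x' w" by (subst sum.delta[OF fin]) simp
  finally show ?thesis .
qed

lemma VN_lemma: assumes fin: "finite (UNIV :: 'x set)" and s2: "\<forall>s\<in>kerA y 2. s \<in> Lset y 2"
  shows "\<sigma> \<in> Rdeg p \<Longrightarrow> vnil \<sigma> \<Longrightarrow> dA y p \<sigma> = 0 \<Longrightarrow> \<sigma> \<in> Lset y p"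
proof (induction p arbitrary: \<sigma>)
  case 0 then show ?case using Rdeg_small Lset_zero[OF y2] by (metis zero_less_numeral)
next
  case (Suc k)
  show ?case
  proof (cases "Suc k \<le> 2")
    case True
    show ?thesis
    proof (cases "Suc k = 2")
      case True
      then have "\<sigma> \<in> kerA y 2" using Suc.prems by (simp add: kerA_def numeral_2_eq_2 zero_fun_def)
      then show ?thesis using s2 True by (simp add: numeral_2_eq_2)
    next
      case False then show ?thesis using \<open>Suc k \<le> 2\<close> Suc.prems Rdeg_small Lset_zero[OF y2]
        by (metis le_neq_implies_less)
    qed
  next
    case False
    then have k2: "2 \<le> k" by simp
    have l0: "l0part \<sigma> = 0"
    proof
      fix b :: "'x list \<times> 'q \<times> 'x list"
      obtain u q v where b: "b = (u,q,v)" by (cases b)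
      show "l0part \<sigma> b = 0 b"
      proof (cases "u = [] \<and> v = []")
        case True
        then have "rdeg b \<noteq> Suc k" using k2 by (simp add: b rdeg_def)
        then show ?thesis using Suc.prems(1) True by (simp add: b l0part_def Rdeg_def)
      next
        case False then show ?thesis using Suc.prems(2) by (auto simp: b l0part_def vnil_def)
      qed
    qed
    define S where "S = (\<Sum>x\<in>UNIV. lmul (delta [x]) (lpart \<sigma> x))"
    have dec: "\<sigma> = S" unfolding S_def using ldecomp[OF fin, of \<sigma>] l0 by simp
    have pdeg: "lpart \<sigma> x \<in> Rdeg k" for x using lpart_Rdeg[OF Suc.prems(1)] .
    have pvnil: "vnil (lpart \<sigma> x)" for x using Suc.prems(2) by (auto simp: vnil_def lpart_def)
    have dsum: "dA y (Suc k) \<sigma> = (\<Sum>x\<in>UNIV. fmul (delta [x]) (dA y k (lpart \<sigma> x)))"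
    proof -
      have "dA y (Suc k) S = (\<Sum>x\<in>UNIV. dA y (Suc k) (lmul (delta [x]) (lpart \<sigma> x)))"
        unfolding S_def by (rule dA_sum[OF y2]) (use lmul_Rdeg[OF y2 delta_Xt pdeg] Rdeg_Rhat in auto)
      then have "dA y (Suc k) \<sigma> = (\<Sum>x\<in>UNIV. dA y (Suc k) (lmul (delta [x]) (lpart \<sigma> x)))"
        unfolding dec .
      also have "\<dots> = (\<Sum>x\<in>UNIV. fmul (delta [x]) (dA y k (lpart \<sigma> x)))"
      proof (rule sum.cong[OF refl])
        fix x
        show "dA y (Suc k) (lmul (delta [x]) (lpart \<sigma> x)) = fmul (delta [x]) (dA y k (lpart \<sigma> x))"
          using dA_lmul[OF y2 delta_Xt[of "[x]"] pdeg[of x]] by simp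
      qed
      finally show ?thesis .
    qed
    have "dA y k (lpart \<sigma> x) = 0" for x
    proof
      fix w
      have "dA y k (lpart \<sigma> x) w = (\<Sum>x\<in>UNIV. fmul (delta [x]) (dA y k (lpart \<sigma> x))) (x # w)"
        using sum_delta_eval_cons[OF fin] by simp
      also have "\<dots> = 0" using dsum Suc.prems(3) by (metis zero_fun_apply)
      finally show "dA y k (lpart \<sigma> x) w = 0 w" by simp
    qed
    then have "lpart \<sigma> x \<in> Lset y k" for x using Suc.IH pdeg pvnil by blast
    then have "lmul (delta [x]) (lpart \<sigma> x) \<in> Lset y (Suc k)" for x
      using Lset_lmul[OF y2 delta_Xt[of "[x]"], of "lpart \<sigma> x" k] by simp
    then have "S \<in> Lset y (Suc k)" unfolding S_def by (intro Lset_sum[OF y2])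
    then show ?thesis unfolding dec .
  qed
qed

lemma RV_lemma: assumes fin: "finite (UNIV :: 'x set)" and sk: "\<forall>s\<in>kerA y k. s \<in> Lset y k"
  and tau: "\<tau> \<in> Rdeg (Suc k)" "RV \<tau>" "dA y (Suc k) \<tau> = 0"
  shows "\<tau> \<in> Lset y (Suc k)"
proof -
  have r0: "r0part \<tau> = 0"
  proof
    fix b :: "'x list \<times> 'q \<times> 'x list"
    obtain u q v where b: "b = (u,q,v)" by (cases b)
    show "r0part \<tau> b = 0 b" using tau(2) by (auto simp: b r0part_def RV_def)
  qed
  define S where "S = (\<Sum>x\<in>UNIV. rmul (rpart \<tau> x) (delta [x]))"
  have dec: "\<tau> = S" unfolding S_def using rdecomp[OF fin, of \<tau>] r0 by simp
  have pdeg: "rpart \<tau> x \<in> Rdeg k" for x using rpart_Rdeg[OF tau(1)] .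
  have dsum: "dA y (Suc k) \<tau> = (\<Sum>x\<in>UNIV. fmul (dA y k (rpart \<tau> x)) (delta [x]))"
  proof -
    have "dA y (Suc k) S = (\<Sum>x\<in>UNIV. dA y (Suc k) (rmul (rpart \<tau> x) (delta [x])))"
      unfolding S_def by (rule dA_sum[OF y2]) (use rmul_Rdeg[OF y2 delta_Xt pdeg] Rdeg_Rhat in auto)
    then have "dA y (Suc k) \<tau> = (\<Sum>x\<in>UNIV. dA y (Suc k) (rmul (rpart \<tau> x) (delta [x])))"
      unfolding dec .
    also have "\<dots> = (\<Sum>x\<in>UNIV. fmul (dA y k (rpart \<tau> x)) (delta [x]))"
    proof (rule sum.cong[OF refl])
      fix x
      show "dA y (Suc k) (rmul (rpart \<tau> x) (delta [x])) = fmul (dA y k (rpart \<tau> x)) (delta [x])"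
        using dA_rmul[OF y2 delta_Xt[of "[x]"] pdeg[of x]] by simp
    qed
    finally show ?thesis .
  qed
  have "dA y k (rpart \<tau> x) = 0" for x
  proof
    fix w
    have "dA y k (rpart \<tau> x) w = (\<Sum>x\<in>UNIV. fmul (dA y k (rpart \<tau> x)) (delta [x])) (w @ [x])"
      using sum_delta_eval_snoc[OF fin] by simp
    also have "\<dots> = 0" using dsum tau(3) by (metis zero_fun_apply)
    finally show "dA y k (rpart \<tau> x) w = 0 w" by simp
  qed
  then have "rpart \<tau> x \<in> Lset y k" for x using sk pdeg by (simp add: kerA_def)
  then have "rmul (rpart \<tau> x) (delta [x]) \<in> Lset y (Suc k)" for x
    using Lset_rmul[OF y2 delta_Xt[of "[x]"], of "rpart \<tau> x" k] by simp
  then have "S \<in> Lset y (Suc k)" unfolding S_def by (intro Lset_sum[OF y2])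
  then show ?thesis unfolding dec .
qed

end


lemma sum_lessThan_split: fixes a b :: nat and h :: "nat \<Rightarrow> 'a::comm_monoid_add" shows "(\<Sum>i<a+b. h i) = (\<Sum>i<a. h i) + (\<Sum>i<b. h (a+i))"
  by (induction b) (simp_all add: add.assoc)

lemma lspan_induct[consumes 1, case_names zero add smult base]:
  assumes f: "f \<in> lspan S" and z: "P 0"
    and add: "\<And>f g. P f \<Longrightarrow> P g \<Longrightarrow> P (f + g)"
    and sm: "\<And>c f. P f \<Longrightarrow> P (\<lambda>w. c * f w)"
    and base: "\<And>s. s \<in> S \<Longrightarrow> P s"
  shows "P f"
proof -
  obtain n and c :: "nat \<Rightarrow> rat" and s where s: "\<forall>i<n. s i \<in> S" and fe: "f = (\<lambda>w. \<Sum>i<n. c i * s i w)"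
    using f by (auto simp: lspan_def)
  have "\<forall>m\<le>n. P (\<lambda>w. \<Sum>i<m. c i * s i w)"
  proof (intro allI impI)
    fix m assume "m \<le> n" then show "P (\<lambda>w. \<Sum>i<m. c i * s i w)"
    proof (induction m)
      case 0
      have "(\<lambda>w. \<Sum>i<0. c i * s i w) = 0" by (simp add: fun_eq_iff)
      then show ?case using z by simp
    next
      case (Suc m)
      have "(\<lambda>w. \<Sum>i<Suc m. c i * s i w) = (\<lambda>w. \<Sum>i<m. c i * s i w) + (\<lambda>w. c m * s m w)"
        by (simp add: fun_eq_iff)
      moreover have "P (\<lambda>w. c m * s m w)" using sm base s Suc.prems by simp
      ultimately show ?case using add Suc by simp
    qed
  qed
  then show ?thesis using fe by simp
qed

lemma lspan_base: "s \<in> S \<Longrightarrow> s \<in> lspan S"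
  unfolding lspan_def by (rule CollectI, rule exI[of _ 1], rule exI[of _ "\<lambda>_. 1"], rule exI[of _ "\<lambda>_. s"]) auto

lemma lspan_zero: "0 \<in> lspan S"
  unfolding lspan_def by (rule CollectI, rule exI[of _ 0]) (auto simp: fun_eq_iff)

lemma lspan_add: assumes "f \<in> lspan S" "g \<in> lspan S" shows "f + g \<in> lspan S"
proof -
  obtain n1 and c1 :: "nat \<Rightarrow> rat" and s1 where 1: "\<forall>i<n1. s1 i \<in> S" "f = (\<lambda>w. \<Sum>i<n1. c1 i * s1 i w)"
    using assms(1) by (auto simp: lspan_def)
  obtain n2 and c2 :: "nat \<Rightarrow> rat" and s2 where 2: "\<forall>i<n2. s2 i \<in> S" "g = (\<lambda>w. \<Sum>i<n2. c2 i * s2 i w)"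
    using assms(2) by (auto simp: lspan_def)
  let ?c = "\<lambda>i. if i < n1 then c1 i else c2 (i - n1)"
  let ?s = "\<lambda>i. if i < n1 then s1 i else s2 (i - n1)"
  have "\<forall>i<n1+n2. ?s i \<in> S" using 1 2 by auto
  moreover have "f + g = (\<lambda>w. \<Sum>i<n1+n2. ?c i * ?s i w)"
  proof
    fix w
    have a: "(\<Sum>i<n1. ?c i * ?s i w) = (\<Sum>i<n1. c1 i * s1 i w)" by (rule sum.cong) auto
    have b: "(\<Sum>i<n2. ?c (n1+i) * ?s (n1+i) w) = (\<Sum>i<n2. c2 i * s2 i w)" by (rule sum.cong) auto
    show "(f + g) w = (\<Sum>i<n1+n2. ?c i * ?s i w)"
      unfolding sum_lessThan_split[where a=n1 and b=n2] a b using 1(2) 2(2) by simp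
  qed
  ultimately have "(\<forall>i<n1+n2. ?s i \<in> S) \<and> f + g = (\<lambda>w. \<Sum>i<n1+n2. ?c i * ?s i w)" by (rule conjI)
  then show ?thesis unfolding lspan_def mem_Collect_eq
    by (rule exI[where x="n1+n2", OF exI[where x="?c", OF exI[where x="?s"]]])
qed

lemma lspan_smult: assumes "f \<in> lspan S" shows "(\<lambda>w. c * f w) \<in> lspan S"
proof -
  obtain n and c1 :: "nat \<Rightarrow> rat" and s1 where 1: "\<forall>i<n. s1 i \<in> S" "f = (\<lambda>w. \<Sum>i<n. c1 i * s1 i w)"
    using assms(1) by (auto simp: lspan_def)
  have "(\<lambda>w. c * f w) = (\<lambda>w. \<Sum>i<n. (c * c1 i) * s1 i w)"
    using 1 by (simp add: fun_eq_iff sum_distrib_left mult.assoc)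
  with 1(1) have "(\<forall>i<n. s1 i \<in> S) \<and> (\<lambda>w. c * f w) = (\<lambda>w. \<Sum>i<n. (c * c1 i) * s1 i w)" by (rule conjI)
  then show ?thesis unfolding lspan_def mem_Collect_eq
    by (rule exI[where x=n, OF exI[where x="\<lambda>i. c * c1 i", OF exI[where x=s1]]])
qed

lemma lspan_uminus: assumes "f \<in> lspan S" shows "- f \<in> lspan S"
proof -
  have "- f = (\<lambda>w. (-1) * f w)" by auto
  then show ?thesis using lspan_smult[OF assms, of "-1"] by simp
qed

lemma lspan_diff: "f \<in> lspan S \<Longrightarrow> g \<in> lspan S \<Longrightarrow> f - g \<in> lspan S"
  using lspan_add[of f S "- g"] lspan_uminus[of g S] by simp

lemma lspan_sum: "(\<And>i. i \<in> I \<Longrightarrow> F i \<in> lspan S) \<Longrightarrow> sum F I \<in> lspan S"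
proof (induction I rule: infinite_finite_induct)
  case (insert i I)
  have "sum F (insert i I) = F i + sum F I" using insert(1,2) by (rule sum.insert)
  then show ?case using insert lspan_add by (metis insertCI)
qed (simp_all add: lspan_zero)

lemma tens_gen: "s \<in> S \<Longrightarrow> t \<in> T \<Longrightarrow> fmul s t \<in> tens S T"
  unfolding tens_def by (rule lspan_base) blast

lemma tens_sum: "(\<And>i. i \<in> I \<Longrightarrow> F i \<in> tens S T) \<Longrightarrow> sum F I \<in> tens S T"
  unfolding tens_def by (rule lspan_sum)

lemma tens_uminus: "f \<in> tens S T \<Longrightarrow> - f \<in> tens S T"
  unfolding tens_def by (rule lspan_uminus)

lemma tens_induct[consumes 1, case_names zero add smult base]:
  assumes f: "f \<in> tens S T" and z: "P 0"
    and add: "\<And>f g. P f \<Longrightarrow> P g \<Longrightarrow> P (f + g)"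
    and sm: "\<And>c f. P f \<Longrightarrow> P (\<lambda>w. c * f w)"
    and base: "\<And>s t. s \<in> S \<Longrightarrow> t \<in> T \<Longrightarrow> P (fmul s t)"
  shows "P f"
  using f unfolding tens_def
  by (rule lspan_induct) (use z[unfolded zero_fun_def] add[unfolded plus_fun_def] sm base in auto)


definition vlen :: "nat \<Rightarrow> ('x,'q) rser \<Rightarrow> bool" where
  "vlen j r = (\<forall>u q v. r (u,q,v) \<noteq> 0 \<longrightarrow> length v = j)"

lemma vlen_zero[simp]: "vlen j 0" by (simp add: vlen_def)
lemma vlen_add: assumes "vlen j r1" "vlen j r2" shows "vlen j (r1 + r2)"
  unfolding vlen_def
proof (intro allI impI)
  fix u q v assume "(r1 + r2) (u,q,v) \<noteq> 0"
  then have "r1 (u,q,v) \<noteq> 0 \<or> r2 (u,q,v) \<noteq> 0" by auto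
  then show "length v = j" using assms unfolding vlen_def by blast
qed
lemma vlen_smult: "vlen j r \<Longrightarrow> vlen j (\<lambda>b. c * r b)"
  unfolding vlen_def by auto
lemma vlen_uminus: "vlen j r \<Longrightarrow> vlen j (- r)"
  unfolding vlen_def by simp
lemma vlen_diff: "vlen j r1 \<Longrightarrow> vlen j r2 \<Longrightarrow> vlen j (r1 - r2)"
  using vlen_add[of j r1 "- r2"] vlen_uminus[of j r2] by simp
lemma vlen_vnil: "vlen 0 r \<longleftrightarrow> vnil r" by (auto simp: vlen_def vnil_def)
lemma vlen_RV: "vlen (Suc j) r \<Longrightarrow> RV r" unfolding vlen_def RV_def by (metis Zero_not_Suc list.size(3))

lemma vlen_lmul: assumes "vlen j r" shows "vlen j (lmul a r)"
  unfolding vlen_def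
proof (intro allI impI)
  fix u q v assume "lmul a r (u,q,v) \<noteq> 0"
  then have "(\<Sum>(a',b)\<in>S2 u. a a' * r (b,q,v)) \<noteq> 0" by (simp add: lmul_apply)
  then obtain p where "p \<in> S2 u" "(case p of (a',b) \<Rightarrow> a a' * r (b,q,v)) \<noteq> 0" by (rule sum_nonzeroE)
  then show "length v = j" using assms by (cases p) (auto simp: vlen_def)
qed

lemma vlen_rmul: assumes "vlen 0 r" "c \<in> Xt j" shows "vlen j (rmul r c)"
  unfolding vlen_def
proof (intro allI impI)
  fix u q v assume "rmul r c (u,q,v) \<noteq> 0"
  then have "(\<Sum>(c',d)\<in>S2 v. r (u,q,c') * c d) \<noteq> 0" by (simp add: rmul_apply)
  then obtain p where p: "p \<in> S2 v" "(case p of (c',d) \<Rightarrow> r (u,q,c') * c d) \<noteq> 0" by (rule sum_nonzeroE)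
  obtain c' d where pd: "p = (c',d)" by (cases p)
  have "c' = []" using p assms(1) by (auto simp: pd vlen_def)
  moreover have "length d = j" using p assms(2) by (auto simp: pd Xt_def)
  ultimately show "length v = j" using p by (auto simp: pd S2_def)
qed

lemma Rdeg2_vlen: "r \<in> Rdeg 2 \<Longrightarrow> vlen 0 r"
  by (auto simp: vlen_def Rdeg_def rdeg_def)

context
  fixes y :: "'q \<Rightarrow> 'x ser"
  assumes y2: "\<forall>q. y q \<in> IF 2"
begin

definition Pl :: "nat \<Rightarrow> nat \<Rightarrow> 'x ser \<Rightarrow> bool" where
  "Pl n j z = (\<exists>\<rho>\<in>Rdeg n. dA y n \<rho> = z \<and> vlen j \<rho>)"

lemma Pl_zero: "Pl n j 0"
  unfolding Pl_def by (rule bexI[of _ 0]) (auto simp: dA_zero[OF y2])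

lemma Pl_add: assumes "Pl n j f" "Pl n j g" shows "Pl n j (f + g)"
proof -
  obtain r1 r2 where r: "r1 \<in> Rdeg n" "dA y n r1 = f" "vlen j r1" "r2 \<in> Rdeg n" "dA y n r2 = g" "vlen j r2"
    using assms unfolding Pl_def by blast
  have "dA y n (r1 + r2) = f + g" using dA_add[OF y2 Rdeg_Rhat[OF r(1)] Rdeg_Rhat[OF r(4)]] r by simp
  then show ?thesis unfolding Pl_def using Rdeg_add[OF r(1,4)] vlen_add[OF r(3,6)] by blast
qed

lemma Pl_smult: assumes "Pl n j f" shows "Pl n j (\<lambda>w. c * f w)"
proof -
  obtain r where r: "r \<in> Rdeg n" "dA y n r = f" "vlen j r" using assms unfolding Pl_def by blast
  have "dA y n (\<lambda>b. c * r b) = (\<lambda>w. c * f w)" using dA_smult[OF y2 Rdeg_Rhat[OF r(1)]] r by simp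
  then show ?thesis unfolding Pl_def using Rdeg_smult[OF r(1)] vlen_smult[OF r(3)] by blast
qed

lemma tens_lift: assumes z: "z \<in> tens (tens (Xt i) (JA y 2)) (Xt j)"
  shows "Pl (i+2+j) j z"
  using z
proof (induction rule: tens_induct)
  case zero then show ?case by (rule Pl_zero)
next
  case (add f g) then show ?case by (rule Pl_add)
next
  case (smult c f) then show ?case by (rule Pl_smult)
next
  case (base t c)
  from base(1) show ?case
  proof (induction rule: tens_induct)
    case zero then show ?case using Pl_zero by (metis fmul_zero_left)
  next
    case (add f g) then show ?case using Pl_add fmul_add_left by metis
  next
    case (smult c' f) then show ?case using Pl_smult by (simp add: fmul_smult_left)
  next
    case (base a w)
    obtain r0 where r0: "r0 \<in> Rdeg 2" "w = dA y 2 r0" using base(2) unfolding JA_def by blast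
    let ?\<rho> = "rmul (lmul a r0) c"
    have l: "lmul a r0 \<in> Rdeg (i+2)" using lmul_Rdeg[OF y2 base(1) r0(1)] .
    have "?\<rho> \<in> Rdeg (i+2+j)" using rmul_Rdeg[OF y2 \<open>c \<in> Xt j\<close> l] .
    moreover have "dA y (i+2+j) ?\<rho> = fmul (fmul a w) c"
      using dA_rmul[OF y2 \<open>c \<in> Xt j\<close> l] dA_lmul[OF y2 base(1) r0(1)] r0(2) by simp
    moreover have "vlen j ?\<rho>"
      using vlen_rmul[OF vlen_lmul[OF Rdeg2_vlen[OF r0(1)]] \<open>c \<in> Xt j\<close>] .
    ultimately show ?case unfolding Pl_def by blast
  qed
qed

definition Gd :: "nat \<Rightarrow> 'x ser \<Rightarrow> bool" where
  "Gd p z = (\<exists>\<sigma>\<in>Rdeg p. vnil \<sigma> \<and> dA y p \<sigma> = z \<and> (\<exists>lw\<in>Lset y p. \<exists>\<rho>\<in>Rdeg p. RV \<rho> \<and> \<sigma> = lw + \<rho>))"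

lemma Gd_zero: "Gd p 0"
  unfolding Gd_def
  by (rule bexI[of _ 0]) (auto simp: vnil_def RV_def dA_zero[OF y2] Lset_zero[OF y2] intro!: bexI[of _ 0])

lemma Gd_add: assumes "Gd p f" "Gd p g" shows "Gd p (f + g)"
proof -
  obtain s1 l1 r1 where 1: "s1 \<in> Rdeg p" "vnil s1" "dA y p s1 = f" "l1 \<in> Lset y p" "r1 \<in> Rdeg p" "RV r1" "s1 = l1 + r1"
    using assms(1) unfolding Gd_def by blast
  obtain s2 l2 r2 where 2: "s2 \<in> Rdeg p" "vnil s2" "dA y p s2 = g" "l2 \<in> Lset y p" "r2 \<in> Rdeg p" "RV r2" "s2 = l2 + r2"
    using assms(2) unfolding Gd_def by blast
  have "dA y p (s1 + s2) = f + g" using dA_add[OF y2 Rdeg_Rhat[OF 1(1)] Rdeg_Rhat[OF 2(1)]] 1 2 by simp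
  moreover have "vnil (s1 + s2)" using 1(2) 2(2) by (simp add: vnil_def)
  moreover have "RV (r1 + r2)" using 1(6) 2(6) by (simp add: RV_def)
  moreover have "s1 + s2 = (l1 + l2) + (r1 + r2)" using 1(7) 2(7) by (simp add: algebra_simps)
  ultimately show ?thesis unfolding Gd_def
    using Rdeg_add[OF 1(1) 2(1)] Rdeg_add[OF 1(5) 2(5)] Lset_add[OF y2 1(4) 2(4)] by blast
qed

lemma Gd_smult: assumes "Gd p f" shows "Gd p (\<lambda>w. c * f w)"
proof -
  obtain s1 l1 r1 where 1: "s1 \<in> Rdeg p" "vnil s1" "dA y p s1 = f" "l1 \<in> Lset y p" "r1 \<in> Rdeg p" "RV r1" "s1 = l1 + r1"
    using assms(1) unfolding Gd_def by blast
  have "dA y p (\<lambda>b. c * s1 b) = (\<lambda>w. c * f w)" using dA_smult[OF y2 Rdeg_Rhat[OF 1(1)]] 1 by simp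
  moreover have "vnil (\<lambda>b. c * s1 b)" using 1(2) by (simp add: vnil_def)
  moreover have "RV (\<lambda>b. c * r1 b)" using 1(6) by (simp add: RV_def)
  moreover have "(\<lambda>b. c * s1 b) = (\<lambda>b. c * l1 b) + (\<lambda>b. c * r1 b)" using 1(7) by (simp add: fun_eq_iff algebra_simps)
  ultimately show ?thesis unfolding Gd_def
    using Rdeg_smult[OF 1(1)] Rdeg_smult[OF 1(5)] Lset_smult[OF y2 1(4)] by blast
qed

lemma Gd_tens: assumes "z \<in> tens S T" and "\<And>s t. s \<in> S \<Longrightarrow> t \<in> T \<Longrightarrow> Gd p (fmul s t)"
  shows "Gd p z"
  using assms(1)
proof (induction rule: tens_induct)
  case zero show ?case by (rule Gd_zero)
next
  case (add f g) then show ?case by (rule Gd_add)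
next
  case (smult c f) then show ?case by (rule Gd_smult)
next
  case (base s t) then show ?case by (rule assms(2))
qed

end


section \<open>The Koszul step\<close>

definition Ygen :: "'q \<Rightarrow> ('x,'q) rser" where
  "Ygen q = (\<lambda>b. if b = ([],q,[]) then 1 else 0)"

lemma Ygen_Rdeg: "Ygen q \<in> Rdeg 2"
proof -
  have "Ygen q \<in> Rhat" unfolding Rhat_def
  proof (intro CollectI allI)
    fix n show "finite {b. rdeg b = n \<and> Ygen q b \<noteq> 0}"
      by (rule finite_subset[of _ "{([],q,[])}"]) (auto simp: Ygen_def)
  qed
  then show ?thesis by (auto simp: Rdeg_def Ygen_def rdeg_def)
qed

lemma lmul_Ygen: "lmul g (Ygen q) (u,q',v) = (if q' = q \<and> v = [] then g u else 0)"
proof -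
  have "(\<Sum>p\<in>S2 u. g (fst p) * Ygen q (snd p,q',v)) = g (fst (u,take 0 u)) * Ygen q (snd (u,take 0 u),q',v)"
  proof (rule sum_single[where pz="(u,take 0 u)"])
    fix p assume p: "p \<in> S2 u" "p \<noteq> (u,take 0 u)"
    obtain a b where ab: "p = (a,b)" by (cases p)
    show "g (fst p) * Ygen q (snd p,q',v) = 0"
    proof (cases "b = []")
      case True then have "a = u" using p ab by (auto simp: S2_def)
      then show ?thesis using p ab True by auto
    qed (simp add: ab Ygen_def)
  qed (simp, simp add: S2_def)
  then show ?thesis by (auto simp: lmul_apply split_def Ygen_def)
qed

lemma Wn2_eq: "Wn y 2 = tens (tens (Xt 0) (JA y 2)) (Xt 0)"
  by (simp add: Wn_def)

lemma Wn3_mem: assumes "z \<in> Wn y 3"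
  shows "z \<in> tens (tens (Xt 0) (JA y 2)) (Xt 1)" "z \<in> tens (tens (Xt 1) (JA y 2)) (Xt 0)"
proof -
  have h: "\<forall>i\<in>{..1::nat}. z \<in> tens (tens (Xt i) (JA y 2)) (Xt (1 - i))" using assms by (simp add: Wn_def)
  have "z \<in> tens (tens (Xt 0) (JA y 2)) (Xt (1 - 0))" using bspec[OF h, where x=0] by simp
  then show "z \<in> tens (tens (Xt 0) (JA y 2)) (Xt 1)" by simp
  have "z \<in> tens (tens (Xt 1) (JA y 2)) (Xt (1 - 1))" using bspec[OF h, where x=1] by simp
  then show "z \<in> tens (tens (Xt 1) (JA y 2)) (Xt 0)" by simp
qed

lemma JA_Wn2: assumes "w \<in> JA y 2" shows "w \<in> Wn y 2"
proof -
  have d0: "delta [] \<in> Xt 0" using delta_Xt[of "[]"] by simp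
  have "fmul (delta []) w \<in> tens (Xt 0) (JA y 2)" using tens_gen[OF d0 assms] .
  then have "fmul (fmul (delta []) w) (delta []) \<in> tens (tens (Xt 0) (JA y 2)) (Xt 0)" using tens_gen d0 by blast
  then show ?thesis by (simp add: Wn2_eq)
qed

context
  fixes y :: "'q \<Rightarrow> 'x ser"
  assumes y2: "\<forall>q. y q \<in> IF 2"
begin

lemma Gd_a: assumes s3: "\<forall>s\<in>kerA y 3. s \<in> Lset y 3" and p3: "3 \<le> p"
  and a: "a \<in> Xt (p-3)" and z3: "z3 \<in> Wn y 3"
  shows "Gd y p (fmul a z3)"
proof -
  have e1: "1+2+0 = (3::nat)" and e2: "0+2+1 = (3::nat)" by simp_all
  obtain r1 where r1: "r1 \<in> Rdeg 3" "dA y 3 r1 = z3" "vlen 0 r1"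
    using tens_lift[OF y2 Wn3_mem(2)[OF z3], unfolded e1 Pl_def[OF y2]] by blast
  obtain r2 where r2: "r2 \<in> Rdeg 3" "dA y 3 r2 = z3" "vlen 1 r2"
    using tens_lift[OF y2 Wn3_mem(1)[OF z3], unfolded e2 Pl_def[OF y2]] by blast
  have "r1 - r2 \<in> kerA y 3"
    using Rdeg_diff[OF r1(1) r2(1)] dA_diff'[OF y2 Rdeg_Rhat[OF r1(1)] Rdeg_Rhat[OF r2(1)]] r1(2) r2(2)
    by (simp add: kerA_def)
  then have L: "r1 - r2 \<in> Lset y 3" using s3 by blast
  have pe: "p - 3 + 3 = p" using p3 by simp
  let ?\<sigma> = "lmul a r1"
  have "?\<sigma> \<in> Rdeg p" using lmul_Rdeg[OF y2 a r1(1)] pe by simp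
  moreover have "vnil ?\<sigma>" using vlen_lmul[OF r1(3)] vlen_vnil by blast
  moreover have "dA y p ?\<sigma> = fmul a z3" using dA_lmul[OF y2 a r1(1)] pe r1(2) by simp
  moreover have "lmul a (r1 - r2) \<in> Lset y p" using Lset_lmul[OF y2 a L] pe by simp
  moreover have "lmul a r2 \<in> Rdeg p" using lmul_Rdeg[OF y2 a r2(1)] pe by simp
  moreover have "RV (lmul a r2)" using vlen_RV vlen_lmul[OF r2(3)] by (metis One_nat_def)
  moreover have "?\<sigma> = lmul a (r1 - r2) + lmul a r2" by (simp add: lmul_diff)
  ultimately show ?thesis unfolding Gd_def[OF y2] by blast
qed

lemma Gd_b: assumes p2: "2 \<le> p" and jj: "jj \<in> JA y (p-2)" and w: "w \<in> Wn y 2"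
  shows "Gd y p (fmul jj w)"
proof -
  have e0: "0+2+0 = (2::nat)" by simp
  obtain r where r: "r \<in> Rdeg 2" "dA y 2 r = w" "vlen 0 r"
    using tens_lift[OF y2 w[unfolded Wn2_eq], unfolded e0 Pl_def[OF y2]] by blast
  obtain r' where r': "r' \<in> Rdeg (p-2)" "jj = dA y (p-2) r'" using jj unfolding JA_def by blast
  have jX: "jj \<in> Xt (p-2)" using JA_Xt[OF y2 jj] .
  have wX: "w \<in> Xt 2" using JA_Xt[OF y2] r unfolding JA_def by blast
  have pe: "p - 2 + 2 = p" using p2 by simp
  let ?\<sigma> = "lmul jj r"
  have "?\<sigma> \<in> Rdeg p" using lmul_Rdeg[OF y2 jX r(1)] pe by simp
  moreover have "vnil ?\<sigma>" using vlen_lmul[OF r(3)] vlen_vnil by blast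
  moreover have "dA y p ?\<sigma> = fmul jj w" using dA_lmul[OF y2 jX r(1)] pe r(2) by simp
  moreover have "- (rmul r' w - ?\<sigma>) \<in> Lset y p"
    using Lset_uminus[OF y2 Lset_triv[OF y2 r'(1) r(1)]] pe r(2) r'(2) by simp
  moreover have "rmul r' w \<in> Rdeg p" using rmul_Rdeg[OF y2 wX r'(1)] pe by simp
  moreover have "RV (rmul r' w)"
  proof -
    have "w [] = 0" using wX by (simp add: Xt_def)
    then show ?thesis by (simp add: RV_def rmul_apply S2_def)
  qed
  moreover have "?\<sigma> = - (rmul r' w - ?\<sigma>) + rmul r' w" by simp
  ultimately show ?thesis unfolding Gd_def[OF y2] by blast
qed

end


context
  fixes y :: "'q \<Rightarrow> 'x ser"
  assumes y2: "\<forall>q. y q \<in> IF 2"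
begin

lemma syz_step:
  assumes fin: "finite (UNIV :: 'x set)" and kosz: "koszul y"
    and s2: "\<forall>s\<in>kerA y 2. s \<in> Lset y 2" and s3: "\<forall>s\<in>kerA y 3. s \<in> Lset y 3"
    and sk: "\<forall>s\<in>kerA y k. s \<in> Lset y k" and k3: "3 \<le> k"
    and s: "s \<in> kerA y (Suc k)"
  shows "s \<in> Lset y (Suc k)"
proof -
  define p where "p = Suc k"
  have p3: "3 \<le> p" and p2: "2 \<le> p" and p1: "p - 1 = k" using k3 by (auto simp: p_def)
  have sR: "s \<in> Rdeg p" and sA: "dA y p s = 0" using s by (auto simp: kerA_def p_def)
  define s0 where "s0 = r0part s"
  have s0R: "s0 \<in> Rdeg p" unfolding s0_def using r0part_Rdeg[OF sR] .
  have s0v: "vnil s0" by (simp add: s0_def vnil_def r0part_def)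
  define e where "e = dA y p s0"
  define Q0 where "Q0 = {q. \<exists>u. s (u,q,[]) \<noteq> 0}"
  have finQ: "finite Q0"
  proof -
    have "Q0 \<subseteq> (\<lambda>b. fst (snd b)) ` {b. rdeg b = p \<and> s b \<noteq> 0}"
    proof
      fix q assume "q \<in> Q0"
      then obtain u where u: "s (u,q,[]) \<noteq> 0" by (auto simp: Q0_def)
      then have "rdeg (u,q,[]) = p" using sR by (auto simp: Rdeg_def)
      then show "q \<in> (\<lambda>b. fst (snd b)) ` {b. rdeg b = p \<and> s b \<noteq> 0}"
        using u by (intro image_eqI[where x="(u,q,[])"]) auto
    qed
    moreover have "finite {b. rdeg b = p \<and> s b \<noteq> 0}" using sR by (simp add: Rdeg_def Rhat_def)
    then have "finite ((\<lambda>b. fst (snd b)) ` {b. rdeg b = p \<and> s b \<noteq> 0})" by simp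
    ultimately show ?thesis by (rule finite_subset)
  qed
  define g where "g q = (\<lambda>u. s (u,q,[]))" for q
  have gX: "g q \<in> Xt (p-2)" for q
  proof -
    have "g q \<in> Fhat" unfolding Fhat_def
    proof (intro CollectI allI)
      fix n
      have "{u. length u = n \<and> g q u \<noteq> 0} \<subseteq> fst ` {b. rdeg b = n + 2 \<and> s b \<noteq> 0}"
      proof
        fix u assume "u \<in> {u. length u = n \<and> g q u \<noteq> 0}"
        then show "u \<in> fst ` {b. rdeg b = n + 2 \<and> s b \<noteq> 0}"
          by (intro image_eqI[where x="(u,q,[])"]) (auto simp: g_def rdeg_def)
      qed
      moreover have "finite (fst ` {b. rdeg b = n + 2 \<and> s b \<noteq> 0})" using sR by (simp add: Rdeg_def Rhat_def)
      ultimately show "finite {u. length u = n \<and> g q u \<noteq> 0}" by (rule finite_subset)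
    qed
    moreover have "g q u = 0" if "length u \<noteq> p - 2" for u
    proof -
      have "rdeg (u,q,[]) \<noteq> p" using that p2 by (auto simp: rdeg_def)
      then show ?thesis using sR by (simp add: g_def Rdeg_def)
    qed
    ultimately show ?thesis by (simp add: Xt_def)
  qed
  have s0eq: "s0 = (\<Sum>q\<in>Q0. lmul (g q) (Ygen q))"
  proof
    fix b :: "'x list \<times> 'q \<times> 'x list"
    obtain u q' v where b: "b = (u,q',v)" by (cases b)
    have "(\<Sum>q\<in>Q0. lmul (g q) (Ygen q)) b = (\<Sum>q\<in>Q0. if q' = q \<and> v = [] then g q u else 0)"
      by (simp add: sum_fun_apply b lmul_Ygen)
    also have "\<dots> = (if v = [] then (\<Sum>q\<in>Q0. if q' = q then g q u else 0) else 0)"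
      by auto
    also have "\<dots> = (if v = [] then (if q' \<in> Q0 then g q' u else 0) else 0)"
      using finQ by simp
    also have "\<dots> = s0 b"
      by (auto simp: b s0_def r0part_def g_def Q0_def)
    finally show "s0 b = (\<Sum>q\<in>Q0. lmul (g q) (Ygen q)) b" by simp
  qed
  have pe2: "p - 2 + 2 = p" using p2 by simp
  have eC: "e \<in> kzC y p 2"
  proof -
    have "e = (\<Sum>q\<in>Q0. dA y p (lmul (g q) (Ygen q)))"
      unfolding e_def s0eq
      by (rule dA_sum[OF y2], rule Rdeg_Rhat, rule lmul_Rdeg[OF y2 gX Ygen_Rdeg])
    also have "\<dots> = (\<Sum>q\<in>Q0. fmul (g q) (dA y 2 (Ygen q)))"
    proof (rule sum.cong[OF refl])
      fix q show "dA y p (lmul (g q) (Ygen q)) = fmul (g q) (dA y 2 (Ygen q))"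
        using dA_lmul[OF y2 gX[of q] Ygen_Rdeg[of q]] pe2 by simp
    qed
    finally have ee: "e = (\<Sum>q\<in>Q0. fmul (g q) (dA y 2 (Ygen q)))" .
    have "fmul (g q) (dA y 2 (Ygen q)) \<in> tens (Xt (p-2)) (Wn y 2)" for q
    proof -
      have "dA y 2 (Ygen q) \<in> JA y 2" unfolding JA_def by (rule imageI[OF Ygen_Rdeg])
      then show ?thesis by (rule tens_gen[OF gX JA_Wn2])
    qed
    then have "e \<in> tens (Xt (p-2)) (Wn y 2)" unfolding ee by (rule tens_sum)
    moreover have "kzC y p 2 = tens (Xt (p-2)) (Wn y 2)" using p2 unfolding kzC_def by (rule if_P)
    ultimately show ?thesis by simp
  qed
  have eR: "e \<in> kzRel y p 1"
  proof -
    define S where "S = (\<Sum>x\<in>UNIV. rmul (rpart s x) (delta [x]))"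
    have dec: "s = s0 + S" unfolding S_def s0_def using rdecomp[OF fin, of s] .
    have pdeg: "rpart s x \<in> Rdeg k" for x using rpart_Rdeg[OF sR[unfolded p_def]] .
    have SR: "S \<in> Rhat" unfolding S_def using rmul_Rdeg[OF y2 delta_Xt pdeg] Rdeg_Rhat by (intro Rhat_sum) blast
    have dS: "dA y p S = (\<Sum>x\<in>UNIV. fmul (dA y k (rpart s x)) (delta [x]))"
    proof -
      have "dA y p S = (\<Sum>x\<in>UNIV. dA y p (rmul (rpart s x) (delta [x])))"
        unfolding S_def by (rule dA_sum[OF y2]) (use rmul_Rdeg[OF y2 delta_Xt pdeg] Rdeg_Rhat in auto)
      also have "\<dots> = (\<Sum>x\<in>UNIV. fmul (dA y k (rpart s x)) (delta [x]))"
      proof (rule sum.cong[OF refl])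
        fix x show "dA y p (rmul (rpart s x) (delta [x])) = fmul (dA y k (rpart s x)) (delta [x])"
          using dA_rmul[OF y2 delta_Xt[of "[x]"] pdeg[of x]] by (simp add: p_def)
      qed
      finally show ?thesis .
    qed
    have "0 = dA y p (s0 + S)" using sA dec by simp
    also have "\<dots> = e + dA y p S" unfolding e_def using dA_add[OF y2 Rdeg_Rhat[OF s0R] SR] .
    finally have ee: "e = - (\<Sum>x\<in>UNIV. fmul (dA y k (rpart s x)) (delta [x]))"
      using dS by (simp add: eq_neg_iff_add_eq_0)
    have "fmul (dA y k (rpart s x)) (delta [x]) \<in> tens (JA y k) (Xt 1)" for x
    proof -
      have "dA y k (rpart s x) \<in> JA y k" unfolding JA_def using pdeg by blast
      then show ?thesis using tens_gen[OF _ delta_Xt[of "[x]"]] by simp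
    qed
    then have "e \<in> tens (JA y k) (Xt 1)" unfolding ee by (intro tens_uminus tens_sum)
    moreover have "kzRel y p 1 = tens (JA y (p-1)) (Wn y 1)" using p2 unfolding kzRel_def by (intro if_P) simp
    moreover have "Wn y 1 = Xt 1" by (simp add: Wn_def)
    ultimately show ?thesis using p1 by simp
  qed
  have "kzC y p 2 \<inter> kzRel y p 1 \<subseteq> setplus (kzC y p 3) (kzRel y p 2)"
  proof -
    have "(if (2::nat) = 0 then kzC y p 0 else kzC y p 2 \<inter> kzRel y p (2 - 1))
        \<subseteq> setplus (kzC y p (Suc 2)) (kzRel y p 2)"
      by (rule kosz[unfolded koszul_def, rule_format]) (use p2 in simp_all)
    then show ?thesis by (simp add: numeral_3_eq_3)
  qed
  then have "e \<in> setplus (kzC y p 3) (kzRel y p 2)" using eC eR by blast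
  then obtain a b where ab: "e = a + b" "a \<in> kzC y p 3" "b \<in> kzRel y p 2"
    unfolding setplus_def by auto
  have "kzC y p 3 = tens (Xt (p-3)) (Wn y 3)" using p3 unfolding kzC_def by (rule if_P)
  then have aT: "a \<in> tens (Xt (p-3)) (Wn y 3)" using ab(2) by simp
  have "kzRel y p 2 = tens (JA y (p-2)) (Wn y 2)" using p2 unfolding kzRel_def by (rule if_P)
  then have bT: "b \<in> tens (JA y (p-2)) (Wn y 2)" using ab(3) by simp
  have "Gd y p a" using aT by (rule Gd_tens[OF y2]) (rule Gd_a[OF y2 s3 p3])
  moreover have "Gd y p b" using bT by (rule Gd_tens[OF y2]) (rule Gd_b[OF y2 p2])
  ultimately have "Gd y p e" using Gd_add[OF y2] ab(1) by simp
  then obtain \<sigma> l \<rho> where sg: "\<sigma> \<in> Rdeg p" "vnil \<sigma>" "dA y p \<sigma> = e" "l \<in> Lset y p" "\<rho> \<in> Rdeg p" "RV \<rho>" "\<sigma> = l + \<rho>"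
    unfolding Gd_def[OF y2] by blast
  have d1: "s0 - \<sigma> \<in> Lset y p"
  proof (rule VN_lemma[OF y2 fin s2])
    show "s0 - \<sigma> \<in> Rdeg p" using Rdeg_diff[OF s0R sg(1)] .
    show "vnil (s0 - \<sigma>)" using s0v sg(2) by (simp add: vnil_def)
    show "dA y p (s0 - \<sigma>) = 0" using dA_diff'[OF y2 Rdeg_Rhat[OF s0R] Rdeg_Rhat[OF sg(1)]] sg(3) e_def by simp
  qed
  have lA: "dA y p l = 0" using Lset_kerA[OF y2 sg(4)] by (simp add: kerA_def)
  have lR: "l \<in> Rdeg p" using Lset_kerA[OF y2 sg(4)] by (simp add: kerA_def)
  define \<tau> where "\<tau> = s - (s0 - \<sigma>) - l"
  have tR: "\<tau> \<in> Rdeg p" unfolding \<tau>_def using Rdeg_diff[OF Rdeg_diff[OF sR Rdeg_diff[OF s0R sg(1)]] lR] .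
  have tRV: "RV \<tau>"
  proof -
    have "\<tau> (u,q,[]) = \<rho> (u,q,[])" for u q
      using sg(7) by (simp add: \<tau>_def s0_def r0part_def)
    then show ?thesis using sg(6) by (simp add: RV_def)
  qed
  have tA: "dA y p \<tau> = 0"
  proof -
    have dd: "dA y p (s0 - \<sigma>) = 0" using Lset_kerA[OF y2 d1] by (simp add: kerA_def)
    have "dA y p \<tau> = dA y p (s - (s0 - \<sigma>)) - dA y p l"
      unfolding \<tau>_def by (rule dA_diff'[OF y2]) (use Rdeg_Rhat Rdeg_diff[OF sR Rdeg_diff[OF s0R sg(1)]] lR in auto)
    also have "\<dots> = dA y p s - dA y p (s0 - \<sigma>) - dA y p l"
      using dA_diff'[OF y2 Rdeg_Rhat[OF sR] Rdeg_Rhat[OF Rdeg_diff[OF s0R sg(1)]]] by simp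
    finally show ?thesis using sA dd lA by simp
  qed
  have "\<tau> \<in> Lset y p" using RV_lemma[OF y2 fin sk tR[unfolded p_def] tRV tA[unfolded p_def]] p_def by simp
  moreover have "s = \<tau> + (s0 - \<sigma>) + l" by (simp add: \<tau>_def)
  ultimately have "\<tau> + (s0 - \<sigma>) + l \<in> Lset y p" using Lset_add[OF y2 Lset_add[OF y2 _ d1] sg(4)] by blast
  then have "s \<in> Lset y p" using \<open>s = \<tau> + (s0 - \<sigma>) + l\<close> by simp
  then show ?thesis by (simp add: p_def)
qed

end


context
  fixes y :: "'q \<Rightarrow> 'x ser"
  assumes y2: "\<forall>q. y q \<in> IF 2"
begin

lemma syz_surj_Lset: "syz_surj y p \<longleftrightarrow> (\<forall>s\<in>kerA y p. s \<in> Lset y p)"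
proof -
  have "s \<in> Lset y p \<longleftrightarrow> (\<exists>r\<in>kerK y p. pi1 p r = s)" for s
    by (simp add: Lset_def[OF y2] image_iff) (metis)
  then show ?thesis unfolding syz_surj_def by simp
qed

lemma all_surj:
  assumes fin: "finite (UNIV :: 'x set)" and kosz: "koszul y"
    and s2: "syz_surj y 2" and s3: "syz_surj y 3"
  shows "\<forall>p\<ge>2. syz_surj y p"
proof -
  have L2: "\<forall>s\<in>kerA y 2. s \<in> Lset y 2" using s2 syz_surj_Lset by blast
  have L3: "\<forall>s\<in>kerA y 3. s \<in> Lset y 3" using s3 syz_surj_Lset by blast
  have "2 \<le> p \<longrightarrow> (\<forall>s\<in>kerA y p. s \<in> Lset y p)" for p
  proof (induction p)
    case 0 then show ?case by simp
  next
    case (Suc k)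
    show ?case
    proof (cases "Suc k \<le> 3")
      case True
      then have "Suc k = 2 \<or> Suc k = 3 \<or> Suc k < 2" by linarith
      then show ?thesis
      proof (elim disjE)
        assume e: "Suc k = 2" show ?thesis unfolding e using L2 by blast
      next
        assume e: "Suc k = 3" show ?thesis unfolding e using L3 by blast
      qed simp
    next
      case False
      then have k3: "3 \<le> k" by simp
      then have Lk: "\<forall>s\<in>kerA y k. s \<in> Lset y k" using Suc.IH by simp
      show ?thesis using syz_step[OF y2 fin kosz L2 L3 Lk k3] by blast
    qed
  qed
  then show ?thesis using syz_surj_Lset by blast
qed

end

theorem theorem3p4:
  fixes y :: "'q \<Rightarrow> 'x list \<Rightarrow> rat"
  assumes "\<forall>q. y q \<in> IF 2"
  shows "((\<forall>p\<ge>2. syz_surj y p) \<longrightarrow> quadratic y)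
       \<and> ((finite (UNIV :: 'x set) \<and> koszul y \<and> syz_surj y 2 \<and> syz_surj y 3)
            \<longrightarrow> quadratic y)"
proof (intro conjI impI)
  assume "\<forall>p\<ge>2. syz_surj y p"
  then show "quadratic y" by (rule quadratic_of_surj[OF assms])
next
  assume h: "finite (UNIV :: 'x set) \<and> koszul y \<and> syz_surj y 2 \<and> syz_surj y 3"
  then have "\<forall>p\<ge>2. syz_surj y p" using all_surj[OF assms] by blast
  then show "quadratic y" by (rule quadratic_of_surj[OF assms])
qed

end
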